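(* Let $n\ge p\ge1$, $\lambda>0$, $0<\varepsilon<\frac34$, $N\ge1$, and let $f=\frac1N\sum_{i=1}^Nf_i$ with each $f_i:\mathbb{R}^{n\times p}\to\mathbb{R}$ twice continuously differentiable. Let $\mathrm{St}(p,n)^\varepsilon$, $\mu,\nu,\mathcal{L},L_g$ be as in the context (built from $f$). Assume there is $B>0$ with $\frac1N\sum_{i=1}^N\|\Lambda_i(X)-\Lambda(X)\|^2\le B$ for all $X\in\mathrm{St}(p,n)^\varepsilon$. Let $\tilde a=\sup_{X\in\mathrm{St}(p,n)^\varepsilon,\,i\in\{1,\dots,N\}}\|\mathrm{grad}f_i(X)\|$ and $\eta^*=\eta^*(\tilde a,\varepsilon,\lambda)$. Let $X_0\in\mathrm{St}(p,n)^\varepsilon$ and $X_{k+1}=X_k-\eta_k\Lambda_{i_k}(X_k)$, where $i_0,i_1,\dots$ are independent and uniform on $\{1,\dots,N\}$, and $\eta_k\le\min\left(\frac1{2L_g},\frac{\nu}{4\lambda^2L_g(1+\varepsilon)},\eta^*\right)$. Then for every $k$, $$\mathbb{E}_{i_k}[\mathcal{L}(X_{k+1})]\le\mathcal{L}(X_k)-\frac{\eta_k}{4}\|\mathrm{grad}f(X_k)\|^2-\frac{\eta_k\nu}{2}\mathcal{N}(X_k)+\frac{L_gB\eta_k^2}{2},$$ where $\mathbb{E}_{i_k}$ denotes expectation over $i_k$ only (conditionally on $X_k$).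
   Context: Frobenius norm/inner product; $\mathrm{sym}(M)=\frac12(M+M^\top)$, $\mathrm{skew}(M)=\frac12(M-M^\top)$; $\mathrm{St}(p,n)^\varepsilon=\{X:\|X^\top X-I_p\|\le\varepsilon\}$; $\mathcal{N}(X)=\frac14\|X^\top X-I_p\|^2$; for any $g$, $\mathrm{grad}g(X)=\mathrm{skew}(\nabla g(X)X^\top)X$; $\Lambda(X)=\mathrm{grad}f(X)+\lambda X(X^\top X-I_p)$ and $\Lambda_i(X)=\mathrm{grad}f_i(X)+\lambda X(X^\top X-I_p)$. $L>0$: Lipschitz constant of $\nabla f$ on $\mathrm{St}(p,n)^\varepsilon$; $L'=\max_{\mathrm{St}(p,n)^\varepsilon}\|\nabla f\|$; $\hat L=\max(L,L')$; $s=\sup_{\mathrm{St}(p,n)^\varepsilon}\|\mathrm{sym}(X^\top\nabla f(X))\|$; $\mu\ge\frac{2}{3-4\varepsilon}\big(L(1-\varepsilon)+3s+\hat L^2\frac{(1+\varepsilon)^2}{\lambda(1-\varepsilon)}\big)$; $\nu=\lambda\mu$; $\mathcal{L}(X)=f(X)-\frac12\langle\mathrm{sym}(X^\top\nabla f(X)),X^\top X-I_p\rangle+\mu\mathcal{N}(X)$; $L_g>0$ is such that $\nabla\mathcal{L}$ is $L_g$-Lipschitz on $\mathrm{St}(p,n)^\varepsilon$. Safeguard: $\eta^*(\tilde a,\varepsilon,\lambda)=\min\{Q,\frac1{2\lambda}\}$, $Q=\inf_{a\in(0,\tilde a],d\in(0,\varepsilon]}\frac{\lambda(1-\varepsilon)d+a\sqrt{(\varepsilon-d)/2}}{a^2+\lambda^2(1+\varepsilon)d^2}$.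 *)

theory Defs
  imports "HOL-Analysis.Analysis" "HOL-Probability.Probability_Mass_Function"
begin

text \<open>Matrices in R^(n x p) are rendered as real^'p^'n (rows indexed by 'n, columns by 'p).
  The norm and inner product on this type are the Frobenius norm / inner product.\<close>

definition Stiefel_eps :: "real \<Rightarrow> (real^'p^'n) set" where
  "Stiefel_eps eps = {X. norm (transpose X ** X - mat 1) \<le> eps}"

definition Ncal :: "real^'p^'n \<Rightarrow> real" where
  "Ncal X = (1/4) * (norm (transpose X ** X - mat 1))\<^sup>2"

definition msym :: "real^'m^'m \<Rightarrow> real^'m^'m" where
  "msym M = (1/2) *\<^sub>R (M + transpose M)"

definition mskew :: "real^'m^'m \<Rightarrow> real^'m^'m" where
  "mskew M = (1/2) *\<^sub>R (M - transpose M)"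

definition egrad :: "('a::real_inner \<Rightarrow> real) \<Rightarrow> 'a \<Rightarrow> 'a" where
  "egrad g X = (SOME G. (g has_derivative (\<lambda>H. G \<bullet> H)) (at X))"

definition rgrad :: "(real^'p^'n \<Rightarrow> real) \<Rightarrow> real^'p^'n \<Rightarrow> real^'p^'n" where
  "rgrad g X = mskew (egrad g X ** transpose X) ** X"

definition Lam :: "(real^'p^'n \<Rightarrow> real) \<Rightarrow> real \<Rightarrow> real^'p^'n \<Rightarrow> real^'p^'n" where
  "Lam g lam X = rgrad g X + lam *\<^sub>R (X ** (transpose X ** X - mat 1))"

definition Lagr :: "(real^'p^'n \<Rightarrow> real) \<Rightarrow> real \<Rightarrow> real^'p^'n \<Rightarrow> real" where
  "Lagr f mu X = f X - (1/2) * (msym (transpose X ** egrad f X) \<bullet> (transpose X ** X - mat 1))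
                 + mu * Ncal X"

definition C2 :: "('a::euclidean_space \<Rightarrow> real) \<Rightarrow> bool" where
  "C2 g \<longleftrightarrow> (\<exists>G G'. (\<forall>x. (g has_derivative (\<lambda>h. G x \<bullet> h)) (at x)) \<and>
                    (\<forall>x. (G has_derivative blinfun_apply (G' x)) (at x)) \<and>
                    continuous_on UNIV G')"

text \<open>Safeguard eta*(a~, eps, lambda) = min{Q, 1/(2 lambda)}, with the convention
  that the infimum over an empty index set is +infinity.\<close>
definition eta_star :: "real \<Rightarrow> real \<Rightarrow> real \<Rightarrow> real" where
  "eta_star atil eps lam =
     (let S = {(lam * (1 - eps) * d + a * sqrt ((eps - d) / 2)) / (a\<^sup>2 + lam\<^sup>2 * (1 + eps) * d\<^sup>2)
               | a d. 0 < a \<and> a \<le> atil \<and> 0 < d \<and> d \<le> eps}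
      in if S = {} then 1 / (2 * lam) else min (Inf S) (1 / (2 * lam)))"

end

theory Submission
  imports Defs
begin


type_synonym ('p,'n) mtx = "real^'p^'n"

lemma mat_inner_def: "(A::real^'m^'n) \<bullet> B = (\<Sum>i\<in>UNIV. \<Sum>j\<in>UNIV. A$i$j * B$i$j)"
  by (simp add: inner_vec_def)

lemma vec_norm_sq: "(norm (v::real^'m))\<^sup>2 = (\<Sum>j\<in>UNIV. (v$j)\<^sup>2)"
proof -
  have "(norm v)\<^sup>2 = v \<bullet> v" by (rule power2_norm_eq_inner)
  also have "\<dots> = (\<Sum>j\<in>UNIV. v$j * v$j)" by (simp add: inner_vec_def)
  finally show ?thesis by (simp add: power2_eq_square)
qed

lemma mat_norm_sq: "(norm (A::real^'m^'n))\<^sup>2 = (\<Sum>i\<in>UNIV. \<Sum>j\<in>UNIV. (A$i$j)\<^sup>2)"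
proof -
  have "(norm A)\<^sup>2 = A \<bullet> A" by (rule power2_norm_eq_inner)
  also have "\<dots> = (\<Sum>i\<in>UNIV. \<Sum>j\<in>UNIV. A$i$j * A$i$j)" by (rule mat_inner_def)
  finally show ?thesis by (simp add: power2_eq_square)
qed

lemma mm_entry: "((A::real^'k^'n) ** (B::real^'m^'k))$i$j = (\<Sum>k\<in>UNIV. A$i$k * B$k$j)"
  by (simp add: matrix_matrix_mult_def)

lemma tr_entry[simp]: "transpose (A::real^'m^'n) $ i $ j = A$j$i"
  by (simp add: transpose_def)

lemma inner_mm_left: "((A::real^'k^'n) ** (B::real^'m^'k)) \<bullet> C = B \<bullet> (transpose A ** C)"
proof -
  have "((A ** B) \<bullet> C) = (\<Sum>i\<in>UNIV. \<Sum>j\<in>UNIV. \<Sum>k\<in>UNIV. A$i$k * B$k$j * C$i$j)"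
    by (simp add: mat_inner_def mm_entry sum_distrib_right)
  also have "\<dots> = (\<Sum>i\<in>UNIV. \<Sum>k\<in>UNIV. \<Sum>j\<in>UNIV. A$i$k * B$k$j * C$i$j)"
    by (rule sum.cong[OF refl], rule sum.swap)
  also have "\<dots> = (\<Sum>k\<in>UNIV. \<Sum>i\<in>UNIV. \<Sum>j\<in>UNIV. A$i$k * B$k$j * C$i$j)"
    by (rule sum.swap)
  also have "\<dots> = (\<Sum>k\<in>UNIV. \<Sum>j\<in>UNIV. \<Sum>i\<in>UNIV. A$i$k * B$k$j * C$i$j)"
    by (rule sum.cong[OF refl], rule sum.swap)
  also have "\<dots> = B \<bullet> (transpose A ** C)"
    by (simp add: mat_inner_def mm_entry sum_distrib_left mult_ac)
  finally show ?thesis .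
qed

lemma inner_transpose: "transpose (A::real^'m^'n) \<bullet> transpose B = A \<bullet> B"
  apply (simp add: mat_inner_def)
  apply (subst sum.swap) by simp

lemma norm_transpose: "norm (transpose (A::real^'m^'n)) = norm A"
  by (simp add: norm_eq_sqrt_inner inner_transpose)

lemma inner_mm_right: "((A::real^'k^'n) ** (B::real^'m^'k)) \<bullet> C = A \<bullet> (C ** transpose B)"
proof -
  have "(A ** B) \<bullet> C = transpose (A ** B) \<bullet> transpose C" by (simp add: inner_transpose)
  also have "\<dots> = (transpose B ** transpose A) \<bullet> transpose C" by (simp add: matrix_transpose_mul)
  also have "\<dots> = transpose A \<bullet> (B ** transpose C)" by (simp add: inner_mm_left)
  also have "\<dots> = transpose A \<bullet> transpose (C ** transpose B)" by (simp add: matrix_transpose_mul)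
  also have "\<dots> = A \<bullet> (C ** transpose B)" by (simp add: inner_transpose)
  finally show ?thesis .
qed

lemma norm_mm: "norm ((A::real^'k^'n) ** (B::real^'m^'k)) \<le> norm A * norm B"
proof -
  have e: "(A ** B)$i$j = row i A \<bullet> column j B" for i j
    by (simp add: mm_entry inner_vec_def row_def column_def)
  have "(norm (A ** B))\<^sup>2 = (\<Sum>i\<in>UNIV. \<Sum>j\<in>UNIV. (row i A \<bullet> column j B)\<^sup>2)"
    by (simp add: mat_norm_sq e)
  also have "\<dots> \<le> (\<Sum>i\<in>UNIV. \<Sum>j\<in>UNIV. (norm (row i A))\<^sup>2 * (norm (column j B))\<^sup>2)"
  proof (intro sum_mono)
    fix i j
    have "\<bar>row i A \<bullet> column j B\<bar> \<le> norm (row i A) * norm (column j B)" by (rule Cauchy_Schwarz_ineq2)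
    then have "\<bar>row i A \<bullet> column j B\<bar>\<^sup>2 \<le> (norm (row i A) * norm (column j B))\<^sup>2"
      by (rule power_mono) simp
    then show "(row i A \<bullet> column j B)\<^sup>2 \<le> (norm (row i A))\<^sup>2 * (norm (column j B))\<^sup>2"
      by (simp add: power_mult_distrib)
  qed
  also have "\<dots> = (\<Sum>i\<in>UNIV. (norm (row i A))\<^sup>2) * (\<Sum>j\<in>UNIV. (norm (column j B))\<^sup>2)"
    by (simp add: sum_product)
  also have "(\<Sum>i\<in>UNIV. (norm (row i A))\<^sup>2) = (norm A)\<^sup>2"
    by (simp only: vec_norm_sq mat_norm_sq row_def vec_lambda_beta)
  also have "(\<Sum>j\<in>UNIV. (norm (column j B))\<^sup>2) = (norm B)\<^sup>2"
    unfolding vec_norm_sq mat_norm_sq column_def vec_lambda_beta by (rule sum.swap)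
  finally have "(norm (A ** B))\<^sup>2 \<le> (norm A * norm B)\<^sup>2" by (simp add: power_mult_distrib)
  then show ?thesis by (rule power2_le_imp_le) simp
qed

lemma bb_mm: "bounded_bilinear ((**) :: real^'k^'n \<Rightarrow> real^'m^'k \<Rightarrow> real^'m^'n)"
proof
  fix a a' :: "real^'k^'n" and b b' :: "real^'m^'k" and r :: real
  show "(a + a') ** b = a ** b + a' ** b"
    by (simp add: matrix_matrix_mult_def vec_eq_iff sum.distrib algebra_simps)
  show "a ** (b + b') = a ** b + a ** b'" by (rule matrix_add_ldistrib)
  show "(r *\<^sub>R a) ** b = r *\<^sub>R (a ** b)" by (simp add: scalar_matrix_assoc)
  show "a ** (r *\<^sub>R b) = r *\<^sub>R (a ** b)" by (simp add: matrix_scalar_ac scalar_matrix_assoc)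
  show "\<exists>K. \<forall>a b. norm ((a::real^'k^'n) ** (b::real^'m^'k)) \<le> norm a * norm b * K"
    by (rule exI[of _ 1]) (simp add: norm_mm)
qed

lemmas mm_add_left = bounded_bilinear.add_left[OF bb_mm]
lemmas mm_add_right = bounded_bilinear.add_right[OF bb_mm]
lemmas mm_diff_left = bounded_bilinear.diff_left[OF bb_mm]
lemmas mm_diff_right = bounded_bilinear.diff_right[OF bb_mm]
lemmas mm_minus_left = bounded_bilinear.minus_left[OF bb_mm]
lemmas mm_minus_right = bounded_bilinear.minus_right[OF bb_mm]
lemmas mm_scaleR_left = bounded_bilinear.scaleR_left[OF bb_mm]
lemmas mm_scaleR_right = bounded_bilinear.scaleR_right[OF bb_mm]
lemmas mm_sum_left = bounded_bilinear.sum_left[OF bb_mm]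
lemmas mm_sum_right = bounded_bilinear.sum_right[OF bb_mm]

lemma tr_add: "transpose ((A::real^'m^'n) + B) = transpose A + transpose B"
  by (simp add: vec_eq_iff)
lemma tr_diff: "transpose ((A::real^'m^'n) - B) = transpose A - transpose B"
  by (simp add: vec_eq_iff)
lemma tr_minus: "transpose (- (A::real^'m^'n)) = - transpose A"
  by (simp add: vec_eq_iff)
lemma tr_sum: "transpose (\<Sum>i\<in>I. (A i::real^'m^'n)) = (\<Sum>i\<in>I. transpose (A i))"
  by (induct I rule: infinite_finite_induct) (auto simp: vec_eq_iff tr_add)
lemma tr_zero: "transpose (0::real^'m^'n) = 0"
  by (simp add: vec_eq_iff)
lemma linear_tr: "bounded_linear (transpose :: real^'m^'n \<Rightarrow> real^'n^'m)"
  by (rule bounded_linear_intro[where K=1]) (simp_all add: tr_add transpose_scalar norm_transpose)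

lemma vec_times_num: "(x::real^'m^'n) * numeral k = (numeral k::real) *\<^sub>R x"
  by (simp add: vec_eq_iff)
lemma vec_num_times: "numeral k * (x::real^'m^'n) = (numeral k::real) *\<^sub>R x"
  by (simp add: vec_eq_iff)

lemmas mm_simps = vec_times_num vec_num_times mm_add_left mm_add_right mm_diff_left mm_diff_right mm_minus_left mm_minus_right
  mm_scaleR_left mm_scaleR_right tr_add tr_diff tr_minus transpose_scalar matrix_transpose_mul
  matrix_mul_assoc tr_zero

lemma inner_sym_skew: "transpose (S::real^'m^'m) = S \<Longrightarrow> transpose K = - K \<Longrightarrow> S \<bullet> K = 0"
proof -
  assume a: "transpose S = S" "transpose K = - K"
  have "S \<bullet> K = transpose S \<bullet> transpose K" by (simp add: inner_transpose)
  also have "\<dots> = - (S \<bullet> K)" using a by simp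
  finally show ?thesis by simp
qed

lemma tr_msym: "transpose (msym M) = msym (M::real^'m^'m)"
  by (simp add: msym_def mm_simps add.commute)
lemma tr_mskew: "transpose (mskew M) = - mskew (M::real^'m^'m)"
  by (simp add: mskew_def mm_simps algebra_simps)

lemma msym_inner: "transpose (D::real^'m^'m) = D \<Longrightarrow> msym M \<bullet> D = M \<bullet> D"
proof -
  assume a: "transpose D = D"
  have "transpose M \<bullet> D = M \<bullet> D" using inner_transpose[of M D] a by simp
  then show ?thesis by (simp add: msym_def inner_add_left)
qed

lemma mskew_inner_self: "mskew (M::real^'m^'m) \<bullet> M = (norm (mskew M))\<^sup>2"
proof -
  have "M = msym M + mskew M" by (simp add: msym_def mskew_def algebra_simps vec_eq_iff)
  then have "mskew M \<bullet> M = mskew M \<bullet> msym M + mskew M \<bullet> mskew M"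
    by (metis inner_add_right)
  also have "mskew M \<bullet> msym M = 0"
    by (subst inner_commute, rule inner_sym_skew) (simp_all add: tr_msym tr_mskew)
  finally show ?thesis by (simp add: power2_norm_eq_inner)
qed

lemma mskew_linear:
  "mskew ((M::real^'m^'m) + N) = mskew M + mskew N" "mskew (c *\<^sub>R M) = c *\<^sub>R mskew M"
  "mskew (\<Sum>i\<in>I. A i) = (\<Sum>i\<in>I. mskew (A i))"
  by (simp_all add: mskew_def mm_simps algebra_simps tr_sum scaleR_sum_right sum_subtractf)

lemma msym_linear:
  "msym ((M::real^'m^'m) + N) = msym M + msym N" "msym (c *\<^sub>R M) = c *\<^sub>R msym M"
  by (simp_all add: msym_def mm_simps algebra_simps)

definition Dm :: "real^'p^'n \<Rightarrow> real^'p^'p" where "Dm X = transpose X ** X - mat 1"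

lemma tr_Dm: "transpose (Dm X) = Dm X"
  by (simp add: Dm_def mm_simps)

lemma tr_mm_self: "transpose ((A::real^'m^'m) ** A) = A ** A" if "transpose A = A"
  using that by (simp add: matrix_transpose_mul)

lemma XB_norm_sq: "(norm ((X::real^'p^'n) ** B))\<^sup>2 = (norm B)\<^sup>2 + B \<bullet> (Dm X ** B)"
proof -
  have "(norm (X ** B))\<^sup>2 = (X ** B) \<bullet> (X ** B)" by (simp add: power2_norm_eq_inner)
  also have "\<dots> = B \<bullet> (transpose X ** X ** B)" by (simp add: inner_mm_left matrix_mul_assoc)
  also have "transpose X ** X = Dm X + mat 1" by (simp add: Dm_def)
  also have "B \<bullet> ((Dm X + mat 1) ** B) = B \<bullet> B + B \<bullet> (Dm X ** B)"
    by (simp add: mm_simps inner_add_right)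
  finally show ?thesis by (simp add: power2_norm_eq_inner)
qed

lemma abs_inner_mm3: "\<bar>(B::real^'m^'k) \<bullet> ((D::real^'k^'k) ** B)\<bar> \<le> norm D * (norm B)\<^sup>2"
proof -
  have "\<bar>B \<bullet> (D ** B)\<bar> \<le> norm B * norm (D ** B)" by (rule Cauchy_Schwarz_ineq2)
  also have "\<dots> \<le> norm B * (norm D * norm B)" by (rule mult_left_mono[OF norm_mm]) simp
  finally show ?thesis by (simp add: power2_eq_square mult_ac)
qed

lemma XB_bounds:
  fixes X :: "real^'p^'n" and B :: "real^'m^'p"
  shows "(norm (X ** B))\<^sup>2 \<le> (1 + norm (Dm X)) * (norm B)\<^sup>2"
    and "(1 - norm (Dm X)) * (norm B)\<^sup>2 \<le> (norm (X ** B))\<^sup>2"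
  using XB_norm_sq[of X B] abs_inner_mm3[of B "Dm X"] by (auto simp: algebra_simps abs_le_iff)

lemma XtC_bound:
  fixes X :: "real^'p^'n" and C :: "real^'m^'n"
  shows "(norm (transpose X ** C))\<^sup>2 \<le> (1 + norm (Dm X)) * (norm C)\<^sup>2"
proof -
  let ?d = "norm (Dm X)" and ?y = "norm (transpose X ** C)"
  have "?y\<^sup>2 = (transpose X ** C) \<bullet> (transpose X ** C)" by (simp add: power2_norm_eq_inner)
  also have "\<dots> = C \<bullet> (X ** (transpose X ** C))" by (simp add: inner_mm_left)
  also have "\<dots> \<le> norm C * norm (X ** (transpose X ** C))" by (rule norm_cauchy_schwarz)
  finally have 1: "?y\<^sup>2 \<le> norm C * norm (X ** (transpose X ** C))" .
  have 2: "(norm (X ** (transpose X ** C)))\<^sup>2 \<le> (1 + ?d) * ?y\<^sup>2" by (rule XB_bounds(1))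
  have d0: "0 \<le> ?d" by simp
  have "norm (X ** (transpose X ** C)) \<le> sqrt (1 + ?d) * ?y"
  proof (rule power2_le_imp_le)
    show "(norm (X ** (transpose X ** C)))\<^sup>2 \<le> (sqrt (1 + ?d) * ?y)\<^sup>2"
      using 2 d0 by (simp add: power_mult_distrib)
  qed (use d0 in simp)
  then have "?y\<^sup>2 \<le> norm C * (sqrt (1 + ?d) * ?y)" using 1
    by (meson mult_left_mono norm_ge_zero order_trans)
  then have "?y \<le> norm C * sqrt (1 + ?d)"
    by (cases "?y = 0") (auto simp: power2_eq_square mult_ac)
  then have "?y\<^sup>2 \<le> (norm C * sqrt (1 + ?d))\<^sup>2" by (rule power_mono) simp
  then show ?thesis using d0 by (simp add: power_mult_distrib mult_ac)
qed

lemma AX_bound: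
  fixes X :: "real^'p^'n" and A :: "real^'n^'m"
  shows "(norm (A ** X))\<^sup>2 \<le> (1 + norm (Dm X)) * (norm A)\<^sup>2"
proof -
  have "norm (A ** X) = norm (transpose X ** transpose A)"
    by (metis matrix_transpose_mul norm_transpose)
  then show ?thesis using XtC_bound[of X "transpose A"] by (simp add: norm_transpose)
qed

lemma egrad_apply:
  fixes g :: "'a::euclidean_space \<Rightarrow> real"
  assumes d: "(g has_derivative D) (at X)"
  shows "egrad g X \<bullet> H = D H"
proof -
  have bl: "linear D" using d by (simp add: has_derivative_def bounded_linear.linear)
  define G where "G = (\<Sum>b\<in>Basis. D b *\<^sub>R b)"
  have DG: "D = (\<lambda>H. G \<bullet> H)"
  proof
    fix H
    have "D H = D (\<Sum>b\<in>Basis. (H \<bullet> b) *\<^sub>R b)" by (simp add: euclidean_representation)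
    also have "\<dots> = (\<Sum>b\<in>Basis. (H \<bullet> b) * D b)"
      by (simp add: linear_sum[OF bl] linear_scale[OF bl])
    also have "\<dots> = G \<bullet> H" unfolding G_def inner_sum_left
      by (rule sum.cong) (simp_all add: inner_commute)
    finally show "D H = G \<bullet> H" .
  qed
  have ex: "\<exists>G. (g has_derivative (\<lambda>H. G \<bullet> H)) (at X)" using d DG by auto
  have "(g has_derivative (\<lambda>H. egrad g X \<bullet> H)) (at X)"
    unfolding egrad_def by (rule someI_ex[OF ex])
  then have "(\<lambda>H. egrad g X \<bullet> H) = D" using d by (rule has_derivative_unique)
  then show ?thesis by metis
qed

lemma egrad_eq:
  fixes g :: "'a::euclidean_space \<Rightarrow> real"
  assumes d: "(g has_derivative (\<lambda>H. G \<bullet> H)) (at X)"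
  shows "egrad g X = G"
proof -
  have "egrad g X \<bullet> H = G \<bullet> H" for H using egrad_apply[OF d] .
  then have "(egrad g X - G) \<bullet> (egrad g X - G) = 0" by (simp add: inner_diff_left)
  then show ?thesis by simp
qed

lemmas mm_deriv = bounded_bilinear.FDERIV[OF bb_mm]
lemmas tr_deriv = bounded_linear.has_derivative[OF linear_tr]

lemma linear_msym: "bounded_linear (msym :: real^'m^'m \<Rightarrow> real^'m^'m)"
proof (rule bounded_linear_intro[where K=1])
  fix M N :: "real^'m^'m" and r :: real
  show "msym (M + N) = msym M + msym N" "msym (r *\<^sub>R M) = r *\<^sub>R msym M" by (simp_all add: msym_linear)
  have "norm (msym M) \<le> (1/2) * (norm M + norm (transpose M))"
    unfolding msym_def by (simp add: norm_triangle_ineq)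
  then show "norm (msym M) \<le> norm M * 1" by (simp add: norm_transpose)
qed
lemmas msym_deriv = bounded_linear.has_derivative[OF linear_msym]

lemma Dm_deriv: "(Dm has_derivative (\<lambda>H. transpose H ** X + transpose X ** H)) (at (X::real^'p^'n))"
proof -
  have "((\<lambda>Y. transpose Y ** Y) has_derivative (\<lambda>H. transpose X ** H + transpose H ** X)) (at X)"
    by (rule mm_deriv[OF tr_deriv[OF has_derivative_ident] has_derivative_ident])
  then have "((\<lambda>Y. transpose Y ** Y - mat 1) has_derivative (\<lambda>H. transpose X ** H + transpose H ** X)) (at X)"
    by (rule has_derivative_diff[OF _ has_derivative_const, simplified])
  then show ?thesis unfolding Dm_def[abs_def] by (rule has_derivative_eq_rhs) (auto simp: add.commute)
qed

lemma Lagr_deriv: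
  fixes f :: "real^'p^'n \<Rightarrow> real"
  assumes fd: "\<And>Y. (f has_derivative (\<lambda>H. Gf Y \<bullet> H)) (at Y)"
    and Gd: "(Gf has_derivative Hd) (at X)"
  shows "(Lagr f mu has_derivative (\<lambda>H. Gf X \<bullet> H
      - 1/2 * (msym (transpose H ** Gf X + transpose X ** Hd H) \<bullet> Dm X
               + msym (transpose X ** Gf X) \<bullet> (transpose H ** X + transpose X ** H))
      + mu * (1/2 * (Dm X \<bullet> (transpose H ** X + transpose X ** H))))) (at X)"
proof -
  have eg: "egrad f = Gf" using egrad_eq[OF fd] by auto
  have L: "Lagr f mu = (\<lambda>Y. f Y - 1/2 * (msym (transpose Y ** Gf Y) \<bullet> Dm Y) + mu * (1/4 * (Dm Y \<bullet> Dm Y)))"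
    by (auto simp: Lagr_def eg Ncal_def Dm_def power2_norm_eq_inner)
  have d1: "((\<lambda>Y. transpose Y ** Gf Y) has_derivative (\<lambda>H. transpose X ** Hd H + transpose H ** Gf X)) (at X)"
    by (rule mm_deriv[OF tr_deriv[OF has_derivative_ident] Gd])
  have d2: "((\<lambda>Y. msym (transpose Y ** Gf Y)) has_derivative (\<lambda>H. msym (transpose X ** Hd H + transpose H ** Gf X))) (at X)"
    by (rule msym_deriv[OF d1])
  have d3: "((\<lambda>Y. msym (transpose Y ** Gf Y) \<bullet> Dm Y) has_derivative
     (\<lambda>H. msym (transpose X ** Gf X) \<bullet> (transpose H ** X + transpose X ** H) + msym (transpose X ** Hd H + transpose H ** Gf X) \<bullet> Dm X)) (at X)"
    by (rule has_derivative_inner[OF d2 Dm_deriv])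
  have d4: "((\<lambda>Y. Dm Y \<bullet> Dm Y) has_derivative
     (\<lambda>H. Dm X \<bullet> (transpose H ** X + transpose X ** H) + (transpose H ** X + transpose X ** H) \<bullet> Dm X)) (at X)"
    by (rule has_derivative_inner[OF Dm_deriv Dm_deriv])
  have d5: "(Lagr f mu has_derivative (\<lambda>H. Gf X \<bullet> H - 1/2 * (msym (transpose X ** Gf X) \<bullet> (transpose H ** X + transpose X ** H) + msym (transpose X ** Hd H + transpose H ** Gf X) \<bullet> Dm X)
      + mu * (1/4 * (Dm X \<bullet> (transpose H ** X + transpose X ** H) + (transpose H ** X + transpose X ** H) \<bullet> Dm X)))) (at X)"
    unfolding L
    by (intro has_derivative_add has_derivative_diff has_derivative_mult_right fd d3 d4)
  show ?thesis
    by (rule has_derivative_eq_rhs[OF d5]) (auto simp: algebra_simps inner_commute)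
qed

lemma skew_conj: "transpose (mskew M) = - mskew M \<Longrightarrow> transpose (transpose X ** mskew M ** X) = - (transpose X ** mskew (M::real^'n^'n) ** (X::real^'p^'n))"
  by (simp add: matrix_transpose_mul matrix_mul_assoc mm_simps)

lemma RW_orth:
  fixes X :: "real^'p^'n" and M :: "real^'n^'n" and lam tau :: real
  shows "(mskew M ** X) \<bullet> (X ** Dm X) = 0"
proof -
  have "(mskew M ** X) \<bullet> (X ** Dm X) = (X ** Dm X) \<bullet> (mskew M ** X)" by (rule inner_commute)
  also have "\<dots> = Dm X \<bullet> (transpose X ** mskew M ** X)" by (simp add: inner_mm_left matrix_mul_assoc)
  also have "\<dots> = 0" by (rule inner_sym_skew[OF tr_Dm skew_conj[OF tr_mskew]])
  finally show ?thesis .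
qed

lemma V_norm_sq:
  fixes X :: "real^'p^'n" and M :: "real^'n^'n" and lam tau :: real
  shows "(norm (mskew M ** X + lam *\<^sub>R (X ** Dm X)))\<^sup>2 = (norm (mskew M ** X))\<^sup>2 + lam\<^sup>2 * (norm (X ** Dm X))\<^sup>2"
proof -
  have "(norm (mskew M ** X + lam *\<^sub>R (X ** Dm X)))\<^sup>2 = (mskew M ** X + lam *\<^sub>R (X ** Dm X)) \<bullet> (mskew M ** X + lam *\<^sub>R (X ** Dm X))"
    by (rule power2_norm_eq_inner)
  also have "\<dots> = (mskew M ** X) \<bullet> (mskew M ** X) + lam\<^sup>2 * ((X ** Dm X) \<bullet> (X ** Dm X))"
    by (simp add: inner_add_left inner_add_right RW_orth inner_commute[of "X ** Dm X" "mskew M ** X"] power2_eq_square)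
  finally show ?thesis by (simp add: power2_norm_eq_inner)
qed

lemma VtX_sum:
  fixes X :: "real^'p^'n" and M :: "real^'n^'n" and lam :: real
  defines "V \<equiv> mskew M ** X + lam *\<^sub>R (X ** Dm X)"
  shows "transpose V ** X + transpose X ** V = (2*lam) *\<^sub>R (Dm X + Dm X ** Dm X)"
proof -
  have a: "transpose (mskew M ** X) ** X + transpose X ** (mskew M ** X) = 0"
    by (simp add: matrix_transpose_mul tr_mskew mm_simps matrix_mul_assoc)
  have b: "transpose X ** X = Dm X + mat 1" by (simp add: Dm_def)
  have c: "transpose (X ** Dm X) ** X = Dm X + Dm X ** Dm X"
    by (simp add: matrix_transpose_mul tr_Dm b mm_simps flip: matrix_mul_assoc)
  have d: "transpose X ** (X ** Dm X) = Dm X + Dm X ** Dm X"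
    by (simp add: matrix_mul_assoc b mm_simps)
  have e: "transpose V ** X + transpose X ** V = (transpose (mskew M ** X) ** X + transpose X ** (mskew M ** X))
     + lam *\<^sub>R (transpose (X ** Dm X) ** X + transpose X ** (X ** Dm X))"
    unfolding V_def by (simp only: tr_add transpose_scalar mm_add_left mm_add_right mm_scaleR_left mm_scaleR_right scaleR_add_right add_ac)
  show ?thesis unfolding e a c d by (simp add: algebra_simps vec_times_num vec_num_times)
qed

lemma DL_formula:
  fixes X G :: "real^'p^'n" and HV :: "real^'p^'n" and lam mu :: real
  defines "R \<equiv> mskew (G ** transpose X) ** X"
  defines "W \<equiv> X ** Dm X"
  defines "V \<equiv> R + lam *\<^sub>R W"
  defines "S \<equiv> msym (transpose X ** G)"
  shows "G \<bullet> V - 1/2 * (msym (transpose V ** G + transpose X ** HV) \<bullet> Dm X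
               + S \<bullet> (transpose V ** X + transpose X ** V))
      + mu * (1/2 * (Dm X \<bullet> (transpose V ** X + transpose X ** V)))
    = (norm (mskew (G ** transpose X)))\<^sup>2 - 1/2 * (G \<bullet> (R ** Dm X)) - 1/2 * (HV \<bullet> W)
      - 3/2 * lam * (S \<bullet> (Dm X ** Dm X)) + lam * mu * (norm W)\<^sup>2"
proof -
  let ?D = "Dm X"
  have symDD: "transpose (?D ** ?D) = ?D ** ?D" by (rule tr_mm_self[OF tr_Dm])
  have f1: "transpose V ** X + transpose X ** V = (2*lam) *\<^sub>R (?D + ?D ** ?D)"
    unfolding V_def R_def W_def by (rule VtX_sum)
  have f3: "G \<bullet> R = (norm (mskew (G ** transpose X)))\<^sup>2"
  proof -
    have "G \<bullet> R = R \<bullet> G" by (rule inner_commute)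
    also have "\<dots> = mskew (G ** transpose X) \<bullet> (G ** transpose X)" unfolding R_def
      by (simp add: inner_mm_right)
    finally show ?thesis by (simp add: mskew_inner_self)
  qed
  have f4: "G \<bullet> W = S \<bullet> ?D"
  proof -
    have "G \<bullet> W = W \<bullet> G" by (rule inner_commute)
    also have "\<dots> = ?D \<bullet> (transpose X ** G)" unfolding W_def by (simp add: inner_mm_left)
    also have "\<dots> = S \<bullet> ?D" unfolding S_def msym_inner[OF tr_Dm] by (rule inner_commute)
    finally show ?thesis .
  qed
  have f5a: "G \<bullet> (W ** ?D) = S \<bullet> (?D ** ?D)"
  proof -
    have "G \<bullet> (W ** ?D) = (X ** (?D ** ?D)) \<bullet> G" unfolding W_def by (simp add: inner_commute matrix_mul_assoc)
    also have "\<dots> = (?D ** ?D) \<bullet> (transpose X ** G)" by (simp add: inner_mm_left)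
    also have "\<dots> = S \<bullet> (?D ** ?D)" unfolding S_def msym_inner[OF symDD] by (rule inner_commute)
    finally show ?thesis .
  qed
  have f5: "msym (transpose V ** G + transpose X ** HV) \<bullet> ?D = G \<bullet> (R ** ?D) + lam * (S \<bullet> (?D ** ?D)) + HV \<bullet> W"
  proof -
    have "msym (transpose V ** G + transpose X ** HV) \<bullet> ?D = (transpose V ** G) \<bullet> ?D + (transpose X ** HV) \<bullet> ?D"
      by (simp add: msym_inner[OF tr_Dm] inner_add_left)
    also have "(transpose V ** G) \<bullet> ?D = G \<bullet> (V ** ?D)" by (simp add: inner_mm_left)
    also have "V ** ?D = R ** ?D + lam *\<^sub>R (W ** ?D)" unfolding V_def by (simp add: mm_simps)
    also have "G \<bullet> (R ** ?D + lam *\<^sub>R (W ** ?D)) = G \<bullet> (R ** ?D) + lam * (S \<bullet> (?D ** ?D))"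
      by (simp add: inner_add_right f5a)
    also have "(transpose X ** HV) \<bullet> ?D = HV \<bullet> W" unfolding W_def by (simp add: inner_mm_left)
    finally show ?thesis by simp
  qed
  have f7: "?D \<bullet> (?D + ?D ** ?D) = (norm W)\<^sup>2"
    unfolding W_def XB_norm_sq by (simp add: inner_add_right power2_norm_eq_inner)
  have f8: "S \<bullet> (?D + ?D ** ?D) = S \<bullet> ?D + S \<bullet> (?D ** ?D)" by (simp add: inner_add_right)
  have gv: "G \<bullet> V = (norm (mskew (G ** transpose X)))\<^sup>2 + lam * (S \<bullet> ?D)"
    unfolding V_def by (simp add: inner_add_right f3 f4)
  show ?thesis unfolding f1 f5 gv inner_scaleR_right f7 f8
    by (simp add: algebra_simps)
qed

lemma Dm_step: "Dm ((X::real^'p^'n) - tau *\<^sub>R V) = Dm X - tau *\<^sub>R (transpose V ** X + transpose X ** V) + (tau*tau) *\<^sub>R (transpose V ** V)"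
  unfolding Dm_def by (simp add: mm_simps algebra_simps)

lemma norm_VtV: "norm (transpose (V::real^'p^'n) ** V) \<le> (norm V)\<^sup>2"
  using norm_mm[of "transpose V" V] by (simp add: norm_transpose power2_eq_square)

lemma norm_DD: "norm ((D::real^'m^'m) ** D) \<le> (norm D)\<^sup>2"
  using norm_mm[of D D] by (simp add: power2_eq_square)

lemma norm_DDD: "norm ((D::real^'m^'m) ** D ** D) \<le> (norm D)^3"
proof -
  have "norm (D ** D ** D) \<le> norm (D ** D) * norm D" by (rule norm_mm)
  also have "\<dots> \<le> (norm D)\<^sup>2 * norm D" by (rule mult_right_mono[OF norm_DD]) simp
  finally show ?thesis by (simp add: power3_eq_cube power2_eq_square)
qed

lemma step_general:
  fixes X :: "real^'p^'n" and M :: "real^'n^'n" and lam tau :: real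
  defines "V \<equiv> mskew M ** X + lam *\<^sub>R (X ** Dm X)"
  assumes t0: "0 \<le> tau" and tl: "tau*lam \<le> 1/2" and lam: "lam > 0"
  shows "norm (Dm (X - tau *\<^sub>R V)) \<le> (1 - 2*(tau*lam)) * norm (Dm X) + 2*(tau*lam) * (norm (Dm X))\<^sup>2
            + tau\<^sup>2 * ((norm (mskew M ** X))\<^sup>2 + lam\<^sup>2 * ((1 + norm (Dm X)) * (norm (Dm X))\<^sup>2))"
proof -
  let ?D = "Dm X" and ?t = "tau*lam"
  have e: "Dm (X - tau *\<^sub>R V) = ((1 - 2*?t) *\<^sub>R ?D - (2*?t) *\<^sub>R (?D ** ?D)) + (tau*tau) *\<^sub>R (transpose V ** V)"
    unfolding Dm_step V_def VtX_sum by (simp add: algebra_simps)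
  have "norm (Dm (X - tau *\<^sub>R V)) \<le> norm ((1 - 2*?t) *\<^sub>R ?D - (2*?t) *\<^sub>R (?D ** ?D)) + norm ((tau*tau) *\<^sub>R (transpose V ** V))"
    unfolding e by (rule norm_triangle_ineq)
  also have "norm ((1 - 2*?t) *\<^sub>R ?D - (2*?t) *\<^sub>R (?D ** ?D)) \<le> (1 - 2*?t) * norm ?D + (2*?t) * (norm ?D)\<^sup>2"
  proof -
    have "norm ((1 - 2*?t) *\<^sub>R ?D - (2*?t) *\<^sub>R (?D ** ?D)) \<le> norm ((1 - 2*?t) *\<^sub>R ?D) + norm ((2*?t) *\<^sub>R (?D ** ?D))"
      by (rule norm_triangle_ineq4)
    also have "\<dots> = (1 - 2*?t) * norm ?D + (2*?t) * norm (?D ** ?D)"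
      using tl t0 lam by simp
    also have "\<dots> \<le> (1 - 2*?t) * norm ?D + (2*?t) * (norm ?D)\<^sup>2"
      using t0 lam by (intro add_left_mono mult_left_mono norm_DD) simp
    finally show ?thesis .
  qed
  also have "norm ((tau*tau) *\<^sub>R (transpose V ** V)) \<le> tau\<^sup>2 * ((norm (mskew M ** X))\<^sup>2 + lam\<^sup>2 * ((1 + norm ?D) * (norm ?D)\<^sup>2))"
  proof -
    have "norm ((tau*tau) *\<^sub>R (transpose V ** V)) \<le> tau\<^sup>2 * (norm V)\<^sup>2"
      using norm_VtV[of V] by (simp add: power2_eq_square mult_left_mono)
    also have "(norm V)\<^sup>2 = (norm (mskew M ** X))\<^sup>2 + lam\<^sup>2 * (norm (X ** ?D))\<^sup>2"
      unfolding V_def by (rule V_norm_sq)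
    also have "(norm (X ** ?D))\<^sup>2 \<le> (1 + norm ?D) * (norm ?D)\<^sup>2" by (rule XB_bounds(1))
    finally show ?thesis by (simp add: mult_left_mono)
  qed
  finally show ?thesis by simp
qed

lemma step_zero_poly:
  fixes X :: "real^'p^'n" and M :: "real^'n^'n" and lam tau :: real
  defines "V \<equiv> mskew M ** X + lam *\<^sub>R (X ** Dm X)"
  assumes R0: "mskew M ** X = 0" and t0: "0 \<le> tau" and tl: "tau*lam \<le> 1/2" and lam: "lam > 0"
  shows "norm (Dm (X - tau *\<^sub>R V)) \<le> (1 - 2*(tau*lam)) * norm (Dm X) + (2*(tau*lam) - (tau*lam)*(tau*lam)) * (norm (Dm X))\<^sup>2 + ((tau*lam)*(tau*lam)) * (norm (Dm X))^3"
proof -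
  let ?D = "Dm X" and ?t = "tau*lam" and ?d = "norm (Dm X)"
  have b: "transpose X ** X = ?D + mat 1" by (simp add: Dm_def)
  have VtV: "transpose V ** V = (lam*lam) *\<^sub>R (?D ** ?D + ?D ** ?D ** ?D)"
  proof -
    have "transpose V ** V = (lam*lam) *\<^sub>R (?D ** (transpose X ** X) ** ?D)"
      unfolding V_def R0 by (simp add: mm_simps tr_Dm)
    also have "\<dots> = (lam*lam) *\<^sub>R (?D ** ?D + ?D ** ?D ** ?D)" unfolding b by (simp add: mm_simps)
    finally show ?thesis .
  qed
  have e: "Dm (X - tau *\<^sub>R V) = (1 - 2*?t) *\<^sub>R ?D + (?t*?t - 2*?t) *\<^sub>R (?D ** ?D) + (?t*?t) *\<^sub>R (?D ** ?D ** ?D)"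
    unfolding Dm_step VtV unfolding V_def VtX_sum by (simp add: algebra_simps)
  have t0': "0 \<le> ?t" using t0 lam by simp
  have "norm (Dm (X - tau *\<^sub>R V)) \<le> norm ((1 - 2*?t) *\<^sub>R ?D) + norm ((?t*?t - 2*?t) *\<^sub>R (?D ** ?D)) + norm ((?t*?t) *\<^sub>R (?D ** ?D ** ?D))"
    unfolding e by (rule order_trans[OF norm_triangle_ineq add_right_mono[OF norm_triangle_ineq]])
  also have "\<dots> = (1 - 2*?t) * ?d + (2*?t - ?t*?t) * norm (?D ** ?D) + (?t*?t) * norm (?D ** ?D ** ?D)"
  proof -
    have "?t * ?t \<le> ?t * 2" by (rule mult_left_mono) (use tl t0' in simp_all)
    then have "?t*?t - 2*?t \<le> 0" by simp
    then have "\<bar>?t*?t - 2*?t\<bar> = 2*?t - ?t*?t" using abs_of_nonpos[of "?t*?t - 2*?t"] by linarith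
    then show ?thesis using tl by simp
  qed
  also have "\<dots> \<le> (1 - 2*?t) * ?d + (2*?t - ?t*?t) * ?d\<^sup>2 + (?t*?t) * ?d^3"
  proof -
    have "?t * ?t \<le> ?t * 2" by (rule mult_left_mono) (use tl t0' in simp_all)
    then have c: "0 \<le> 2*?t - ?t*?t" by simp
    show ?thesis using t0'
      by (intro add_mono order_refl mult_left_mono[OF norm_DD c] mult_left_mono[OF norm_DDD]) simp
  qed
  finally show ?thesis .
qed

lemma poly_le:
  fixes t d :: real
  assumes t0: "0 \<le> t" and tl: "t \<le> 1/2" and d0: "0 \<le> d" and d1: "d < 1"
  shows "(1 - 2*t) * d + (2*t - t*t) * d\<^sup>2 + (t*t) * d^3 \<le> d"
    and "0 < t \<Longrightarrow> 0 < d \<Longrightarrow> (1 - 2*t) * d + (2*t - t*t) * d\<^sup>2 + (t*t) * d^3 < d"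
proof -
  have e: "(2*t - t*t) * d\<^sup>2 + (t*t) * d^3 = t * d * ((2 - t) * d + t * d\<^sup>2)"
    by (simp add: power2_eq_square power3_eq_cube algebra_simps)
  have "d\<^sup>2 \<le> d" using d0 d1 by (simp add: power2_eq_square mult_left_le)
  then have "t * d\<^sup>2 \<le> t * d" using t0 by (rule mult_left_mono)
  then have "(2 - t) * d + t * d\<^sup>2 \<le> 2 * d" by (simp add: algebra_simps)
  then have k: "(2 - t) * d + t * d\<^sup>2 < 2" using d1 by linarith
  have "t * d * ((2 - t) * d + t * d\<^sup>2) \<le> t * d * 2"
    using k t0 d0 by (intro mult_left_mono) simp_all
  then show "(1 - 2*t) * d + (2*t - t*t) * d\<^sup>2 + (t*t) * d^3 \<le> d" using e by (simp add: algebra_simps)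
  assume tp: "0 < t" and dp: "0 < d"
  have "t * d * ((2 - t) * d + t * d\<^sup>2) < t * d * 2"
    using k tp dp by (intro mult_strict_left_mono) simp_all
  then show "(1 - 2*t) * d + (2*t - t*t) * d\<^sup>2 + (t*t) * d^3 < d" using e by (simp add: algebra_simps)
qed




lemma young: fixes u g a :: real assumes "a > 0" shows "u * g \<le> a * g\<^sup>2 + u\<^sup>2 / (4 * a)"
proof -
  have "0 \<le> (2 * a * g - u)\<^sup>2" by simp
  then have "4 * a * (u * g) \<le> 4 * a * (a * g\<^sup>2 + u\<^sup>2 / (4 * a))"
    using assms by (simp add: power2_eq_square algebra_simps)
  then show ?thesis using assms by simp
qed

lemma real_key:
  fixes P g d w L L' s lam mu eps eta Lg DL :: real
  assumes h1: "DL \<ge> P - 1/2*L'*g*d - 1/2*L*(g + lam*w)*w - 3/2*lam* s*d\<^sup>2 + lam*mu*w\<^sup>2"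
    and h2: "g\<^sup>2 \<le> (1+d)*P"
    and d0: "0 \<le> d" and de: "d \<le> eps" and w0: "0 \<le> w" and g0: "0 \<le> g"
    and wl: "(1-d)*d\<^sup>2 \<le> w\<^sup>2" and wu: "w\<^sup>2 \<le> (1+d)*d\<^sup>2"
    and L: "L > 0" and L': "L' \<ge> 0" and s: "s \<ge> 0" and lam: "lam > 0" and e0: "0 < eps" and e1: "eps < 3/4"
    and h5: "mu \<ge> 2/(3-4*eps)*(L*(1-eps) + 3* s + (max L L')\<^sup>2*(1+eps)\<^sup>2/(lam*(1-eps)))"
    and Lg: "Lg > 0" and eta: "eta > 0" and eta1: "eta \<le> 1/(2*Lg)" and eta2: "eta \<le> lam*mu/(4*lam\<^sup>2*Lg*(1+eps))"
  shows "DL \<ge> g\<^sup>2/4 + lam*mu*d\<^sup>2/8 + Lg*eta/2*(g\<^sup>2 + lam\<^sup>2*w\<^sup>2)"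
proof -
  define Lh where "Lh = max L L'"
  define K where "K = Lh\<^sup>2*(1+eps)\<^sup>2/(2*(1-eps))"
  define T where "T = 3/2* s + K/lam"
  have K0: "K \<ge> 0" using e1 by (simp add: K_def)
  have T0: "T \<ge> 0" using K0 s lam by (simp add: T_def)
  have h5': "mu*(3/4 - eps) \<ge> L*(1-eps)/2 + T"
  proof -
    have kk: "2*K/lam = (max L L')\<^sup>2*(1+eps)\<^sup>2/(lam*(1-eps))"
      using e1 lam by (simp add: K_def Lh_def field_simps)
    have "2/(3-4*eps)*(L*(1-eps) + 3* s + 2*K/lam) \<le> mu"
      using h5 unfolding kk .
    then have "L*(1-eps) + 3* s + 2*K/lam \<le> mu * (3-4*eps)/2"
      using e1 by (simp add: field_simps)
    then have "(L*(1-eps) + 3* s + 2*K/lam)/2 \<le> (mu*(3-4*eps)/2)/2" by (rule divide_right_mono) simp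
    moreover have "mu*(3/4-eps) = (mu*(3-4*eps)/2)/2" by (simp add: field_simps)
    moreover have "L*(1-eps)/2 + T = (L*(1-eps) + 3* s + 2*K/lam)/2" by (simp add: T_def field_simps)
    ultimately show ?thesis by metis
  qed
  have mu0: "mu \<ge> 0"
  proof -
    have "L*(1-eps)/2 + T \<ge> 0" using L e1 T0 by simp
    then have "mu*(3/4-eps) \<ge> 0" using h5' by linarith
    then show ?thesis using e1 by (simp add: zero_le_mult_iff)
  qed
  have s1: "Lg*eta \<le> 1/2" using eta1 Lg by (simp add: field_simps)
  have s2: "Lg*eta*lam\<^sup>2 \<le> lam*mu/(4*(1+eps))"
  proof -
    have "(Lg*lam\<^sup>2)*eta \<le> (Lg*lam\<^sup>2)*(lam*mu/(4*lam\<^sup>2*Lg*(1+eps)))"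
      using eta2 Lg lam by (intro mult_left_mono) simp_all
    then have "Lg*eta*lam\<^sup>2 \<le> Lg*(lam*mu/(4*lam\<^sup>2*Lg*(1+eps)))*lam\<^sup>2" by (simp only: mult_ac)
    also have "\<dots> = (Lg*lam\<^sup>2)*(lam*mu)/((Lg*lam\<^sup>2)*(4*(1+eps)))" by (simp only: mult_ac times_divide_eq_right times_divide_eq_left)
    also have "\<dots> = lam*mu/(4*(1+eps))" using Lg lam e0 by (intro mult_divide_mult_cancel_left) simp
    finally show ?thesis .
  qed
  have w2e: "w\<^sup>2 \<le> (1+eps)*d\<^sup>2"
  proof -
    have "(1+d)*d\<^sup>2 \<le> (1+eps)*d\<^sup>2" by (rule mult_right_mono) (use de in simp_all)
    then show ?thesis using wu by linarith
  qed
  have t1: "Lg*eta/2*g\<^sup>2 \<le> g\<^sup>2/4"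
  proof -
    have "(Lg*eta)*g\<^sup>2 \<le> (1/2)*g\<^sup>2" by (rule mult_right_mono[OF s1]) simp
    then show ?thesis by simp
  qed
  have t2: "Lg*eta/2*(lam\<^sup>2*w\<^sup>2) \<le> lam*mu*d\<^sup>2/8"
  proof -
    have "Lg*eta/2*(lam\<^sup>2*w\<^sup>2) = (Lg*eta*lam\<^sup>2)*w\<^sup>2/2" by simp
    also have "\<dots> \<le> (lam*mu/(4*(1+eps)))*w\<^sup>2/2"
      using mult_right_mono[OF s2, of "w\<^sup>2"] by (intro divide_right_mono) simp_all
    also have "\<dots> \<le> (lam*mu/(4*(1+eps)))*((1+eps)*d\<^sup>2)/2"
      using w2e lam mu0 e0 by (intro divide_right_mono mult_left_mono) simp_all
    also have "\<dots> = lam*mu*d\<^sup>2/8" using e0 by (simp add: field_simps)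
    finally show ?thesis .
  qed
  have Pg: "P \<ge> g\<^sup>2/(1+eps)"
  proof -
    have P0: "P \<ge> 0"
    proof (rule ccontr)
      assume "\<not> P \<ge> 0"
      then have "(1+d)*P < 0" using d0 by (simp add: mult_pos_neg)
      then show False using h2 by (smt (verit) zero_le_power2)
    qed
    have "(1+d)*P \<le> (1+eps)*P" by (rule mult_right_mono) (use de P0 in simp_all)
    then have "g\<^sup>2 \<le> (1+eps)*P" using h2 by linarith
    then show ?thesis using e0 by (simp add: field_simps)
  qed
  define u where "u = (L'*d + L*w)/2"
  have u0: "u \<ge> 0" using L' L d0 w0 by (simp add: u_def)
  have u2: "u\<^sup>2 \<le> Lh\<^sup>2*(1+eps)*d\<^sup>2"
  proof -
    have "u \<le> Lh*(d+w)/2" unfolding u_def Lh_def using d0 w0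
      by (intro divide_right_mono) (simp_all add: distrib_left mult_right_mono add_mono)
    then have "u\<^sup>2 \<le> (Lh*(d+w)/2)\<^sup>2" using u0 by (simp add: power_mono)
    also have "\<dots> = Lh\<^sup>2 * ((d+w)\<^sup>2/4)" by (simp add: power_mult_distrib power_divide)
    also have "(d+w)\<^sup>2/4 \<le> (1+eps)*d\<^sup>2"
    proof -
      have "(d+w)\<^sup>2 + (d-w)\<^sup>2 = 2*(d\<^sup>2+w\<^sup>2)" by (simp add: power2_eq_square algebra_simps)
      moreover have "0 \<le> (d-w)\<^sup>2" by simp
      ultimately have "(d+w)\<^sup>2/4 \<le> (d\<^sup>2+w\<^sup>2)/2" by linarith
      also have "\<dots> \<le> (1+eps)*d\<^sup>2"
      proof -
        have "d\<^sup>2 \<le> (1+eps)*d\<^sup>2" using mult_right_mono[of 1 "1+eps" "d\<^sup>2"] e0 by simp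
        then show ?thesis using w2e by (simp add: field_simps)
      qed
      finally show ?thesis .
    qed
    then have "Lh\<^sup>2 * ((d+w)\<^sup>2/4) \<le> Lh\<^sup>2 * ((1+eps)*d\<^sup>2)" by (rule mult_left_mono) simp
    finally show ?thesis by (simp add: mult_ac)
  qed
  define a where "a = (1-eps)/(2*(1+eps))"
  have a0: "a > 0" using e0 e1 by (simp add: a_def)
  have cross: "u*g \<le> a*g\<^sup>2 + K*d\<^sup>2"
  proof -
    have "u*g \<le> a*g\<^sup>2 + u\<^sup>2/(4*a)" by (rule young[OF a0])
    also have "u\<^sup>2/(4*a) \<le> Lh\<^sup>2*(1+eps)*d\<^sup>2/(4*a)" using u2 a0 by (simp add: divide_right_mono)
    also have "Lh\<^sup>2*(1+eps)*d\<^sup>2/(4*a) = K*d\<^sup>2" using e0 e1 by (simp add: a_def K_def field_simps power2_eq_square)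
    finally show ?thesis by simp
  qed
  have Pa: "P - a*g\<^sup>2 \<ge> g\<^sup>2/2"
  proof -
    have ne: "1 + eps \<noteq> 0" using e0 by simp
    have ne2: "2 + 2*eps \<noteq> 0" using e0 by simp
    have q1: "1/(1+eps) = 2/(2*(1+eps))" using ne ne2 by (simp add: field_simps)
    have q2: "2/(2*(1+eps)) - (1-eps)/(2*(1+eps)) = (1+eps)/(2*(1+eps))"
      by (simp add: diff_divide_distrib[symmetric])
    have q: "1/(1+eps) - a = 1/2" unfolding a_def q1 q2 using ne by simp
    have "g\<^sup>2/(1+eps) - a*g\<^sup>2 = g\<^sup>2 * (1/(1+eps) - a)" by (simp add: algebra_simps)
    then have "g\<^sup>2/(1+eps) - a*g\<^sup>2 = g\<^sup>2/2" unfolding q by simp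
    then show ?thesis using Pg by linarith
  qed
  have lampart: "(mu - L/2)*w\<^sup>2 \<ge> (mu/4 + T)*d\<^sup>2"
  proof (cases "mu \<ge> L/2")
    case True
    have "(mu - L/2)*w\<^sup>2 \<ge> (mu - L/2)*((1-eps)*d\<^sup>2)"
    proof (rule mult_left_mono)
      have "(1-eps)*d\<^sup>2 \<le> (1-d)*d\<^sup>2" by (rule mult_right_mono) (use de in simp_all)
      then show "(1-eps)*d\<^sup>2 \<le> w\<^sup>2" using wl by linarith
    qed (use True in simp)
    moreover have "(mu - L/2)*(1-eps) \<ge> mu/4 + T"
    proof -
      have "(mu - L/2)*(1-eps) - (mu/4 + T) = mu*(3/4-eps) - (L*(1-eps)/2 + T)" by (simp add: algebra_simps)
      then show ?thesis using h5' by linarith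
    qed
    ultimately show ?thesis
      using mult_right_mono[of "mu/4 + T" "(mu - L/2)*(1-eps)" "d\<^sup>2"] by (simp add: mult.assoc)
  next
    case False
    have "(mu - L/2)*w\<^sup>2 \<ge> (mu - L/2)*((1+eps)*d\<^sup>2)"
      using False w2e by (intro mult_left_mono_neg) simp_all
    moreover have "(mu - L/2)*(1+eps) \<ge> mu/4 + T"
    proof -
      define c where "c = (3/4+eps)/(3/4-eps)"
      have q: "c \<ge> 1" using e0 e1 by (simp add: c_def field_simps)
      have "mu*(3/4+eps) = c * (mu*(3/4-eps))" using e1 by (simp add: c_def field_simps)
      also have "\<dots> \<ge> c * (L*(1-eps)/2 + T)"
        using h5' q by (intro mult_left_mono) simp_all
      finally have A: "mu*(3/4+eps) \<ge> c * (L*(1-eps)/2) + c * T"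
        by (simp add: distrib_left)
      have B: "c * T \<ge> T" using mult_right_mono[OF q T0] by simp
      have C: "c * (L*(1-eps)/2) \<ge> L*(1+eps)/2"
      proof -
        have "(3/4+eps)*(1-eps) - (1+eps)*(3/4-eps) = eps/2" by (simp add: field_simps)
        then have "(3/4+eps)*(1-eps) \<ge> (1+eps)*(3/4-eps)" using e0 by linarith
        then have "c*(1-eps) \<ge> (1+eps)" using e1 by (simp add: c_def field_simps)
        then have "(c*(1-eps))*(L/2) \<ge> (1+eps)*(L/2)"
          using L by (intro mult_right_mono) simp_all
        then show ?thesis by (simp add: mult_ac)
      qed
      have "(mu - L/2)*(1+eps) - (mu/4+T) = mu*(3/4+eps) - (L*(1+eps)/2 + T)" by (simp add: algebra_simps)
      then show ?thesis using A B C by linarith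
    qed
    ultimately show ?thesis
      using mult_right_mono[of "mu/4 + T" "(mu - L/2)*(1+eps)" "d\<^sup>2"] by (simp add: mult.assoc)
  qed
  have lamp2: "lam*((mu - L/2)*w\<^sup>2) \<ge> lam*((mu/4 + T)*d\<^sup>2)" using lampart lam by simp
  have lamT: "lam*((mu/4 + T)*d\<^sup>2) = lam*mu*d\<^sup>2/4 + 3/2*lam* s*d\<^sup>2 + K*d\<^sup>2"
    using lam unfolding T_def by (simp add: algebra_simps)
  have lamW: "lam*((mu - L/2)*w\<^sup>2) = lam*mu*w\<^sup>2 - 1/2*L*lam*w\<^sup>2" by (simp add: algebra_simps)
  have "DL \<ge> P - u*g - 1/2*L*lam*w\<^sup>2 - 3/2*lam* s*d\<^sup>2 + lam*mu*w\<^sup>2"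
    using h1 by (simp add: u_def algebra_simps power2_eq_square add_divide_distrib)
  then have "DL \<ge> g\<^sup>2/2 + lam*mu*d\<^sup>2/4"
    using cross Pa lamp2 unfolding lamT lamW by linarith
  then show ?thesis using t1 t2 by (simp add: algebra_simps)
qed

lemma safeguard_real:
  fixes a lam eps d tau g :: real
  assumes a: "a > 0" and lam: "lam > 0" and e0: "0 < eps" and e1: "eps < 1"
    and d0: "0 \<le> d" and de: "d \<le> eps" and t0: "0 \<le> tau" and tl: "tau*lam \<le> 1/2"
    and g0: "0 \<le> g" and ga: "g \<le> a"
    and Td: "0 < d \<Longrightarrow> tau \<le> (lam*(1-eps)*d + a* sqrt((eps-d)/2)) / (a\<^sup>2 + lam\<^sup>2*(1+eps)*d\<^sup>2)"
    and Te: "tau \<le> (lam*(1-eps)*eps + a* sqrt((eps-eps)/2)) / (a\<^sup>2 + lam\<^sup>2*(1+eps)*eps\<^sup>2)"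
  shows "(1 - 2*(tau*lam)) * d + 2*(tau*lam) * d\<^sup>2 + tau\<^sup>2 * (g\<^sup>2 + lam\<^sup>2 * ((1 + d) * d\<^sup>2)) \<le> eps"
proof (cases "d = 0")
  case True
  define C where "C = a\<^sup>2 + lam\<^sup>2*(1+eps)*eps\<^sup>2"
  have C: "C \<ge> a\<^sup>2" "C > 0" using a e0 by (simp_all add: C_def add_pos_nonneg)
  have Te': "tau \<le> lam*(1-eps)*eps / C" unfolding C_def using Te by simp
  have "tau * C \<le> lam*(1-eps)*eps" using Te' C(2) by (simp add: pos_le_divide_eq)
  moreover have "tau * a\<^sup>2 \<le> tau * C" using C t0 by (simp add: mult_left_mono)
  ultimately have ta: "tau * a\<^sup>2 \<le> lam*(1-eps)*eps" by linarith
  have "tau\<^sup>2 * g\<^sup>2 \<le> tau\<^sup>2 * a\<^sup>2" using g0 ga by (intro mult_left_mono power_mono) simp_all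
  also have "\<dots> = tau * (tau * a\<^sup>2)" by (simp add: power2_eq_square)
  also have "\<dots> \<le> tau * (lam*(1-eps)*eps)" using ta t0 by (rule mult_left_mono)
  also have "\<dots> = (tau*lam)*((1-eps)*eps)" by (simp add: mult_ac)
  also have "\<dots> \<le> (1/2)*((1-eps)*eps)" using tl e0 e1 by (intro mult_right_mono) simp_all
  also have "\<dots> \<le> eps" using e0 e1 by (simp add: algebra_simps)
  finally show ?thesis using True by simp
next
  case False
  then have dp: "d > 0" using d0 by simp
  define C where "C = a\<^sup>2 + lam\<^sup>2*(1+eps)*d\<^sup>2"
  define b where "b = lam*(1-eps)*d"
  define c where "c = eps - d"
  define r where "r = sqrt (c/2)"
  have C: "C \<ge> a\<^sup>2" "C > 0" using a e0 by (simp_all add: C_def add_pos_nonneg)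
  have c0: "c \<ge> 0" using de by (simp add: c_def)
  have r0: "r \<ge> 0" using c0 by (simp add: r_def)
  have r2: "r\<^sup>2 = c/2" using c0 by (simp add: r_def)
  have b0: "b \<ge> 0" using lam e1 d0 by (simp add: b_def)
  have Td': "tau \<le> (b + a*r)/C" unfolding C_def b_def r_def c_def using Td[OF dp] by simp
  have T: "C * tau \<le> b + a*r" using Td' C(2) by (simp add: pos_le_divide_eq mult.commute)
  have lhs: "(1 - 2*(tau*lam)) * d + 2*(tau*lam) * d\<^sup>2 + tau\<^sup>2 * (g\<^sup>2 + lam\<^sup>2 * ((1 + d) * d\<^sup>2))
      \<le> d - 2*tau*b + C*tau\<^sup>2"
  proof -
    have "2*(tau*lam) * d\<^sup>2 - 2*(tau*lam)*d = - 2*(tau*lam)*d*(1-d)" by (simp add: power2_eq_square algebra_simps)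
    also have "\<dots> \<le> - 2*(tau*lam)*d*(1-eps)"
    proof -
      have "(tau*lam)*d*(1-eps) \<le> (tau*lam)*d*(1-d)" using t0 lam d0 de
        by (intro mult_left_mono) simp_all
      then show ?thesis by simp
    qed
    finally have 1: "(1 - 2*(tau*lam)) * d + 2*(tau*lam) * d\<^sup>2 \<le> d - 2*tau*b" by (simp add: b_def algebra_simps)
    have "g\<^sup>2 + lam\<^sup>2 * ((1 + d) * d\<^sup>2) \<le> C"
    proof -
      have "g\<^sup>2 \<le> a\<^sup>2" using g0 ga by (simp add: power_mono)
      moreover have "lam\<^sup>2 * ((1 + d) * d\<^sup>2) \<le> lam\<^sup>2 * ((1 + eps) * d\<^sup>2)"
        using de by (intro mult_left_mono mult_right_mono) simp_all
      ultimately show ?thesis by (simp add: C_def mult_ac)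
    qed
    then have "tau\<^sup>2 * (g\<^sup>2 + lam\<^sup>2 * ((1 + d) * d\<^sup>2)) \<le> tau\<^sup>2 * C"
      by (rule mult_left_mono) simp
    then have 2: "tau\<^sup>2 * (g\<^sup>2 + lam\<^sup>2 * ((1 + d) * d\<^sup>2)) \<le> C*tau\<^sup>2" by (simp add: mult.commute)
    show ?thesis using 1 2 by linarith
  qed
  have q: "C*tau\<^sup>2 - 2*tau*b \<le> c"
  proof -
    have "C*tau\<^sup>2 = (C*tau)*tau" by (simp add: power2_eq_square)
    also have "\<dots> \<le> (b + a*r)*tau" using T t0 by (rule mult_right_mono)
    finally have 1: "C*tau\<^sup>2 - 2*tau*b \<le> tau*(a*r - b)" by (simp add: algebra_simps)
    show ?thesis
    proof (cases "a*r \<le> b")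
      case True
      then have "tau*(a*r - b) \<le> 0" using t0 by (simp add: mult_nonneg_nonpos)
      then show ?thesis using 1 c0 by linarith
    next
      case False
      have tT: "tau \<le> (b + a*r)/C" using T C by (simp add: pos_le_divide_eq mult.commute)
      have "tau*(a*r - b) \<le> ((b + a*r)/C)*(a*r - b)" using tT False by (intro mult_right_mono) simp_all
      also have "\<dots> = ((a*r)\<^sup>2 - b\<^sup>2)/C" by (simp add: power2_eq_square algebra_simps)
      also have "\<dots> \<le> (a*r)\<^sup>2/C" using C by (simp add: divide_right_mono)
      also have "\<dots> \<le> (a*r)\<^sup>2/a\<^sup>2" using C a by (intro divide_left_mono) simp_all
      also have "\<dots> = c/2" using a r2 by (simp add: power_mult_distrib)
      finally show ?thesis using 1 c0 by linarith
    qed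
  qed
  show ?thesis using lhs q by (simp add: c_def)
qed




lemma etas_le_half: "eta_star atil eps lam \<le> 1/(2*lam)"
  unfolding eta_star_def Let_def by auto

lemma etas_le_T:
  assumes lam: "lam > 0" and e1: "eps < 1" and a: "atil > 0" and d: "0 < d" "d \<le> eps"
  shows "eta_star atil eps lam \<le> (lam*(1-eps)*d + atil* sqrt((eps-d)/2))/(atil\<^sup>2 + lam\<^sup>2*(1+eps)*d\<^sup>2)"
proof -
  define S where "S = {(lam * (1 - eps) * d + a * sqrt ((eps - d) / 2)) / (a\<^sup>2 + lam\<^sup>2 * (1 + eps) * d\<^sup>2)
               | a d. 0 < a \<and> a \<le> atil \<and> 0 < d \<and> d \<le> eps}"
  have mem: "(lam*(1-eps)*d + atil* sqrt((eps-d)/2))/(atil\<^sup>2 + lam\<^sup>2*(1+eps)*d\<^sup>2) \<in> S"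
    unfolding S_def using a d by blast
  have bdd: "bdd_below S"
  proof (rule bdd_belowI[of _ 0])
    fix x assume "x \<in> S"
    then obtain a' d' where x: "x = (lam * (1 - eps) * d' + a' * sqrt ((eps - d') / 2)) / (a'\<^sup>2 + lam\<^sup>2 * (1 + eps) * d'\<^sup>2)"
      and c: "0 < a'" "0 < d'" "d' \<le> eps" unfolding S_def by blast
    have "0 \<le> lam * (1 - eps) * d' + a' * sqrt ((eps - d') / 2)" using c lam e1 by simp
    moreover have "0 \<le> a'\<^sup>2 + lam\<^sup>2 * (1 + eps) * d'\<^sup>2" using c by simp
    ultimately show "0 \<le> x" unfolding x by simp
  qed
  have "eta_star atil eps lam = min (Inf S) (1/(2*lam))"
    unfolding eta_star_def Let_def S_def[symmetric] using mem by auto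
  also have "\<dots> \<le> Inf S" by simp
  also have "\<dots> \<le> (lam*(1-eps)*d + atil* sqrt((eps-d)/2))/(atil\<^sup>2 + lam\<^sup>2*(1+eps)*d\<^sup>2)"
    by (rule cInf_lower[OF mem bdd])
  finally show ?thesis .
qed

lemma etas_empty: "atil \<le> 0 \<Longrightarrow> eta_star atil eps lam = 1/(2*lam)"
  unfolding eta_star_def Let_def by auto

lemma descent:
  fixes Lf :: "real^'p^'n \<Rightarrow> real" and St :: "(real^'p^'n) set"
  assumes deriv: "\<And>Y. (Lf has_derivative (\<lambda>H. egrad Lf Y \<bullet> H)) (at Y)"
    and seg: "\<And>tau. 0 \<le> tau \<Longrightarrow> tau \<le> eta \<Longrightarrow> X - tau *\<^sub>R V \<in> St"
    and Lip: "\<forall>Y\<in>St. \<forall>Z\<in>St. norm (egrad Lf Y - egrad Lf Z) \<le> Lg * norm (Y - Z)"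
    and eta: "0 \<le> eta"
  shows "Lf (X - eta *\<^sub>R V) \<le> Lf X - eta * (egrad Lf X \<bullet> V) + Lg/2 * eta\<^sup>2 * (norm V)\<^sup>2"
proof -
  define phi where "phi = (\<lambda>tau. Lf (X - tau *\<^sub>R V) + tau * (egrad Lf X \<bullet> V) - Lg/2 * tau\<^sup>2 * (norm V)\<^sup>2)"
  have "phi eta \<le> phi 0"
  proof (rule DERIV_nonpos_imp_nonincreasing[OF eta])
    fix tau assume t: "0 \<le> tau" "tau \<le> eta"
    have l: "((\<lambda>tau. X - tau *\<^sub>R V) has_derivative (\<lambda>h. - (h *\<^sub>R V))) (at tau)"
      by (auto intro!: derivative_eq_intros)
    have c: "((\<lambda>tau. Lf (X - tau *\<^sub>R V)) has_derivative (\<lambda>h. egrad Lf (X - tau *\<^sub>R V) \<bullet> (- (h *\<^sub>R V)))) (at tau)"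
      by (rule has_derivative_compose[OF l deriv])
    define y where "y = - (egrad Lf (X - tau *\<^sub>R V) \<bullet> V) + egrad Lf X \<bullet> V - Lg * tau * (norm V)\<^sup>2"
    have "(phi has_derivative (\<lambda>h. egrad Lf (X - tau *\<^sub>R V) \<bullet> (- (h *\<^sub>R V)) + h * (egrad Lf X \<bullet> V) - Lg/2 * (2 * tau * h) * (norm V)\<^sup>2)) (at tau)"
      unfolding phi_def
      by (intro has_derivative_add has_derivative_diff c has_derivative_mult_right has_derivative_mult_left has_derivative_ident)
        (auto intro!: derivative_eq_intros simp: power2_eq_square)
    then have "(phi has_derivative (\<lambda>h. y * h)) (at tau)"
      by (rule has_derivative_eq_rhs) (auto simp: y_def algebra_simps fun_eq_iff)
    then have "DERIV phi tau :> y" by (simp add: has_field_derivative_def)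
    moreover have "y \<le> 0"
    proof -
      have "y = (egrad Lf X - egrad Lf (X - tau *\<^sub>R V)) \<bullet> V - Lg * tau * (norm V)\<^sup>2"
        by (simp add: y_def inner_diff_left)
      also have "(egrad Lf X - egrad Lf (X - tau *\<^sub>R V)) \<bullet> V \<le> norm (egrad Lf X - egrad Lf (X - tau *\<^sub>R V)) * norm V"
        by (rule norm_cauchy_schwarz)
      also have "norm (egrad Lf X - egrad Lf (X - tau *\<^sub>R V)) \<le> Lg * norm (X - (X - tau *\<^sub>R V))"
        using Lip seg[OF order_refl eta] seg[OF t] by (metis scaleR_zero_left diff_zero)
      also have "norm (X - (X - tau *\<^sub>R V)) = tau * norm V" using t by simp
      finally show ?thesis by (simp add: power2_eq_square mult_right_mono mult_ac)
    qed
    ultimately show "\<exists>y. DERIV phi tau :> y \<and> y \<le> 0" by blast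
  qed
  then show ?thesis by (simp add: phi_def)
qed




lemma Stiefel_Dm: "X \<in> Stiefel_eps eps \<longleftrightarrow> norm (Dm X) \<le> eps"
  by (simp add: Stiefel_eps_def Dm_def)

lemma cont_Dm: "continuous_on S (Dm :: real^'p^'n \<Rightarrow> real^'p^'p)"
  by (meson Dm_deriv continuous_at_imp_continuous_on has_derivative_continuous)

lemma compact_Stiefel: "compact (Stiefel_eps eps :: (real^'p^'n) set)"
proof -
  have "Stiefel_eps eps = {X::real^'p^'n. norm (Dm X) \<le> eps}" by (auto simp: Stiefel_Dm)
  moreover have "closed {X::real^'p^'n. norm (Dm X) \<le> eps}"
    by (rule closed_Collect_le) (auto intro!: continuous_intros cont_Dm)
  ultimately have c: "closed (Stiefel_eps eps :: (real^'p^'n) set)" by simp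
  have "bounded (Stiefel_eps eps :: (real^'p^'n) set)"
    unfolding bounded_iff
  proof (intro exI ballI)
    fix X :: "real^'p^'n" assume "X \<in> Stiefel_eps eps"
    then have d: "norm (Dm X) \<le> eps" by (simp add: Stiefel_Dm)
    have "(norm X)\<^sup>2 = mat 1 \<bullet> (transpose X ** X)"
      using inner_mm_left[of X "mat 1" X] by (simp add: power2_norm_eq_inner)
    also have "\<dots> \<le> norm (mat 1 :: real^'p^'p) * norm (transpose X ** X)" by (rule norm_cauchy_schwarz)
    also have "transpose X ** X = Dm X + mat 1" by (simp add: Dm_def)
    also have "norm (Dm X + mat 1) \<le> eps + norm (mat 1 :: real^'p^'p)"
      using d norm_triangle_ineq[of "Dm X" "mat 1"] by linarith
    finally have "(norm X)\<^sup>2 \<le> norm (mat 1 :: real^'p^'p) * (eps + norm (mat 1 :: real^'p^'p))"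
      by (simp add: mult_left_mono)
    moreover have "norm X \<le> 1 + (norm X)\<^sup>2"
    proof (cases "norm X \<le> 1")
      case True then show ?thesis using zero_le_power2[of "norm X"] by linarith
    next
      case False
      then have "norm X * 1 \<le> norm X * norm X" by (intro mult_left_mono) simp_all
      then show ?thesis by (simp add: power2_eq_square)
    qed
    ultimately show "norm X \<le> 1 + norm (mat 1 :: real^'p^'p) * (eps + norm (mat 1 :: real^'p^'p))" by linarith
  qed
  with c show ?thesis by (simp add: compact_eq_bounded_closed)
qed

lemma sup_bound:
  fixes g :: "'a::metric_space \<Rightarrow> 'b::real_normed_vector"
  assumes "compact K" "continuous_on K g" "x \<in> K"
  shows "norm (g x) \<le> Sup {norm (g X) | X. X \<in> K}"
proof -
  have eq: "{norm (g X) | X. X \<in> K} = (\<lambda>X. norm (g X)) ` K" by auto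
  have "compact ((\<lambda>X. norm (g X)) ` K)"
    using assms by (intro compact_continuous_image continuous_intros) auto
  then have "bdd_above ((\<lambda>X. norm (g X)) ` K)" by (intro bounded_imp_bdd_above compact_imp_bounded)
  then show ?thesis unfolding eq using assms(3) by (intro cSup_upper) auto
qed

lemma sup_bound2:
  fixes g :: "nat \<Rightarrow> 'a::metric_space \<Rightarrow> 'b::real_normed_vector"
  assumes "compact K" "\<And>i. i \<in> I \<Longrightarrow> continuous_on K (g i)" "finite I" "x \<in> K" "j \<in> I"
  shows "norm (g j x) \<le> Sup {norm (g i X) | X i. X \<in> K \<and> i \<in> I}"
proof -
  have eq: "{norm (g i X) | X i. X \<in> K \<and> i \<in> I} = (\<Union>i\<in>I. (\<lambda>X. norm (g i X)) ` K)" by auto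
  have "\<And>i. i \<in> I \<Longrightarrow> compact ((\<lambda>X. norm (g i X)) ` K)"
    using assms by (intro compact_continuous_image continuous_intros) auto
  then have "bounded (\<Union>i\<in>I. (\<lambda>X. norm (g i X)) ` K)" using assms(3)
    by (intro bounded_UN compact_imp_bounded) auto
  then have "bdd_above (\<Union>i\<in>I. (\<lambda>X. norm (g i X)) ` K)" by (rule bounded_imp_bdd_above)
  then show ?thesis unfolding eq using assms(4,5) by (intro cSup_upper) auto
qed

lemma tendsto_path: "((\<lambda>t::real. Y + t *\<^sub>R H) \<longlongrightarrow> Y) (at_right 0)" for Y H :: "'a::real_normed_vector"
proof -
  have "((\<lambda>t::real. Y + t *\<^sub>R H) \<longlongrightarrow> Y + 0 *\<^sub>R H) (at_right 0)"
    by (rule tendsto_add[OF tendsto_const tendsto_scaleR[OF tendsto_ident_at tendsto_const]])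
  then show ?thesis by simp
qed

lemma hess_interior:
  fixes Gf :: "real^'p^'n \<Rightarrow> real^'p^'n" and Hf :: "real^'p^'n \<Rightarrow> real^'p^'n \<Rightarrow> real^'p^'n"
  assumes Gd: "(Gf has_derivative Hf Y) (at Y)"
    and Lip: "\<forall>A\<in>Stiefel_eps eps. \<forall>B\<in>Stiefel_eps eps. norm (Gf A - Gf B) \<le> L * norm (A - B)"
    and Y: "norm (Dm Y) < eps"
  shows "norm (Hf Y H) \<le> L * norm H"
proof -
  define phi where "phi = (\<lambda>t::real. Gf (Y + t *\<^sub>R H))"
  have bl: "bounded_linear (Hf Y)" using Gd by (rule has_derivative_bounded_linear)
  have l: "((\<lambda>t::real. Y + t *\<^sub>R H) has_derivative (\<lambda>t. t *\<^sub>R H)) (at 0 within {0<..})"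
    by (auto intro!: derivative_eq_intros)
  have Gd': "(Gf has_derivative Hf Y) (at (Y + 0 *\<^sub>R H))" using Gd by simp
  have pd: "(phi has_derivative (\<lambda>t. Hf Y (t *\<^sub>R H))) (at 0 within {0<..})"
    unfolding phi_def by (rule has_derivative_compose[OF l Gd'])
  then have T1: "((\<lambda>t. ((phi t - phi 0) - Hf Y ((t - 0) *\<^sub>R H)) /\<^sub>R norm (t - 0)) \<longlongrightarrow> 0) (at_right 0)"
    by (simp add: has_derivative_at_within)
  have ev: "eventually (\<lambda>t. ((phi t - phi 0) - Hf Y ((t - 0) *\<^sub>R H)) /\<^sub>R norm (t - 0) = (phi t - phi 0) /\<^sub>R t - Hf Y H) (at_right (0::real))"
    using eventually_at_right_less[of "0::real"]
  proof (rule eventually_mono)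
    fix t :: real assume t: "0 < t"
    have "Hf Y (t *\<^sub>R H) = t *\<^sub>R Hf Y H" by (rule linear_scale[OF bounded_linear.linear[OF bl]])
    then show "((phi t - phi 0) - Hf Y ((t - 0) *\<^sub>R H)) /\<^sub>R norm (t - 0) = (phi t - phi 0) /\<^sub>R t - Hf Y H"
      using t by (simp add: scaleR_diff_right)
  qed
  have "((\<lambda>t. (phi t - phi 0) /\<^sub>R t - Hf Y H) \<longlongrightarrow> 0) (at_right 0)"
    by (rule Lim_transform_eventually[OF T1 ev])
  then have T2: "((\<lambda>t. (phi t - phi 0) /\<^sub>R t) \<longlongrightarrow> Hf Y H) (at_right 0)"
    by (simp add: LIM_zero_iff)
  then have T3: "((\<lambda>t. norm ((phi t - phi 0) /\<^sub>R t)) \<longlongrightarrow> norm (Hf Y H)) (at_right 0)"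
    by (rule tendsto_norm)
  have cD: "isCont Dm Y" by (rule has_derivative_continuous[OF Dm_deriv])
  have "((\<lambda>t. norm (Dm (Y + t *\<^sub>R H))) \<longlongrightarrow> norm (Dm Y)) (at_right 0)"
    by (intro tendsto_norm isCont_tendsto_compose[OF cD] tendsto_path)
  then have evS: "eventually (\<lambda>t. norm (Dm (Y + t *\<^sub>R H)) < eps) (at_right (0::real))"
    using Y by (rule order_tendstoD(2))
  have "eventually (\<lambda>t. norm ((phi t - phi 0) /\<^sub>R t) \<le> L * norm H) (at_right (0::real))"
    using evS eventually_at_right_less[of "0::real"]
  proof eventually_elim
    case (elim t)
    then have a: "norm (Dm (Y + t *\<^sub>R H)) < eps" and t: "0 < t" by simp_all
    have m1: "Y + t *\<^sub>R H \<in> Stiefel_eps eps" using a by (simp add: Stiefel_Dm)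
    have m2: "Y \<in> Stiefel_eps eps" using Y by (simp add: Stiefel_Dm)
    have "norm (Gf (Y + t *\<^sub>R H) - Gf Y) \<le> L * norm ((Y + t *\<^sub>R H) - Y)"
      using Lip m1 m2 by blast
    then have "norm (phi t - phi 0) \<le> L * norm ((Y + t *\<^sub>R H) - Y)" by (simp add: phi_def)
    also have "\<dots> = t * (L * norm H)" using t by simp
    finally have "norm (phi t - phi 0) \<le> t * (L * norm H)" .
    then have "norm (phi t - phi 0) / t \<le> t * (L * norm H) / t" using t by (intro divide_right_mono) simp_all
    moreover have "norm ((phi t - phi 0) /\<^sub>R t) = norm (phi t - phi 0) / t" using t by (simp add: divide_inverse_commute)
    ultimately show "norm ((phi t - phi 0) /\<^sub>R t) \<le> L * norm H" using t by simp
  qed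
  then show ?thesis by (rule tendsto_upperbound[OF T3]) simp
qed

lemma hess_bound:
  fixes Gf :: "real^'p^'n \<Rightarrow> real^'p^'n" and Hf :: "real^'p^'n \<Rightarrow> real^'p^'n \<Rightarrow> real^'p^'n"
  assumes Gd: "\<And>Y. (Gf has_derivative Hf Y) (at Y)"
    and Hc: "continuous_on UNIV (\<lambda>Y. Hf Y H)"
    and Lip: "\<forall>A\<in>Stiefel_eps eps. \<forall>B\<in>Stiefel_eps eps. norm (Gf A - Gf B) \<le> L * norm (A - B)"
    and e0: "0 < eps" and e1: "eps < 1" and X: "X \<in> Stiefel_eps eps"
  shows "norm (Hf X H) \<le> L * norm H"
proof (cases "norm (Dm X) < eps")
  case True
  then show ?thesis by (rule hess_interior[OF Gd Lip])
next
  case False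
  define d where "d = norm (Dm X)"
  have de: "d = eps" using False X by (simp add: Stiefel_Dm d_def)
  have dp: "0 < d" using de e0 by simp
  define Xt where "Xt = (\<lambda>t. X - t *\<^sub>R (mskew 0 ** X + 1 *\<^sub>R (X ** Dm X)))"
  have R0: "mskew (0::real^'n^'n) ** X = 0" by (simp add: mskew_def tr_zero)
  have in_int: "norm (Dm (Xt t)) < eps" if t: "0 < t" "t < 1/2" for t
  proof -
    have "norm (Dm (Xt t)) \<le> (1 - 2*(t*1)) * d + (2*(t*1) - (t*1)*(t*1)) * d\<^sup>2 + ((t*1)*(t*1)) * d^3"
      unfolding Xt_def d_def using t by (intro step_zero_poly[OF R0]) simp_all
    also have "\<dots> < d" using t dp de e1 by (intro poly_le(2)) simp_all
    finally show ?thesis using de by simp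
  qed
  have bnd: "eventually (\<lambda>t. norm (Hf (Xt t) H) \<le> L * norm H) (at_right (0::real))"
  proof -
    have "eventually (\<lambda>t::real. t < 1/2) (at_right 0)"
      unfolding eventually_at_right_field by (rule exI[of _ "1/2"]) auto
    then show ?thesis using eventually_at_right_less[of "0::real"]
    proof eventually_elim
      case (elim t)
      then have "norm (Dm (Xt t)) < eps" by (intro in_int) simp_all
      then show ?case by (rule hess_interior[where Gf=Gf and Hf=Hf and Y="Xt t", OF Gd[of "Xt t"] Lip])
    qed
  qed
  have XtX: "(Xt \<longlongrightarrow> X) (at_right 0)"
  proof -
    have "((\<lambda>t::real. X - t *\<^sub>R (mskew 0 ** X + 1 *\<^sub>R (X ** Dm X))) \<longlongrightarrow> X - 0 *\<^sub>R (mskew 0 ** X + 1 *\<^sub>R (X ** Dm X))) (at_right 0)"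
      by (rule tendsto_diff[OF tendsto_const tendsto_scaleR[OF tendsto_ident_at tendsto_const]])
    then show ?thesis by (simp add: Xt_def)
  qed
  have cH: "isCont (\<lambda>Y. Hf Y H) X" using Hc by (simp add: continuous_on_eq_continuous_at)
  have "((\<lambda>t. norm (Hf (Xt t) H)) \<longlongrightarrow> norm (Hf X H)) (at_right 0)"
    by (intro tendsto_norm isCont_tendsto_compose[OF cH XtX])
  then show ?thesis by (rule tendsto_upperbound[OF _ bnd]) simp
qed




lemma Lam_expand: "Lam g lam X = mskew (egrad g X ** transpose X) ** X + lam *\<^sub>R (X ** Dm X)"
  by (simp add: Lam_def rgrad_def Dm_def)

lemma safe_step:
  fixes Y :: "real^'p^'n" and M :: "real^'n^'n"
  assumes Y: "norm (Dm Y) \<le> eps" and lam: "lam > 0" and e0: "0 < eps" and e1: "eps < 3/4"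
    and gb: "norm (mskew M ** Y) \<le> atil"
    and t0: "0 \<le> tau" and te: "tau \<le> eta_star atil eps lam"
  shows "norm (Dm (Y - tau *\<^sub>R (mskew M ** Y + lam *\<^sub>R (Y ** Dm Y)))) \<le> eps"
proof -
  let ?d = "norm (Dm Y)"
  have th: "tau * lam \<le> 1/2"
  proof -
    have "tau \<le> 1/(2*lam)" using te etas_le_half[of atil eps lam] by linarith
    then show ?thesis using lam by (simp add: field_simps)
  qed
  show ?thesis
  proof (cases "atil \<le> 0")
    case True
    then have "norm (mskew M ** Y) \<le> 0" using gb by linarith
    then have R0: "mskew M ** Y = 0" by simp
    have "norm (Dm (Y - tau *\<^sub>R (mskew M ** Y + lam *\<^sub>R (Y ** Dm Y))))
        \<le> (1 - 2*(tau*lam)) * ?d + (2*(tau*lam) - (tau*lam)*(tau*lam)) * ?d\<^sup>2 + ((tau*lam)*(tau*lam)) * ?d^3"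
      by (rule step_zero_poly[OF R0 t0 th lam])
    also have "\<dots> \<le> ?d" using t0 lam th Y e1 by (intro poly_le(1)) simp_all
    finally show ?thesis using Y by simp
  next
    case False
    then have a: "atil > 0" by simp
    have "norm (Dm (Y - tau *\<^sub>R (mskew M ** Y + lam *\<^sub>R (Y ** Dm Y))))
       \<le> (1 - 2*(tau*lam)) * ?d + 2*(tau*lam) * ?d\<^sup>2 + tau\<^sup>2 * ((norm (mskew M ** Y))\<^sup>2 + lam\<^sup>2 * ((1 + ?d) * ?d\<^sup>2))"
      by (rule step_general[OF t0 th lam])
    also have "\<dots> \<le> eps"
    proof (rule safeguard_real[OF a lam e0 _ _ Y t0 th _ gb])
      show "eps < 1" using e1 by simp
      show "0 \<le> ?d" by simp
      show "0 \<le> norm (mskew M ** Y)" by simp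
      show "tau \<le> (lam*(1-eps)*?d + atil * sqrt((eps-?d)/2)) / (atil\<^sup>2 + lam\<^sup>2*(1+eps)*?d\<^sup>2)" if "0 < ?d"
        using te etas_le_T[OF lam _ a that Y] e1 by simp
      show "tau \<le> (lam*(1-eps)*eps + atil * sqrt((eps-eps)/2)) / (atil\<^sup>2 + lam\<^sup>2*(1+eps)*eps\<^sup>2)"
        using te etas_le_T[OF lam _ a e0 order_refl] e1 by simp
    qed
    finally show ?thesis .
  qed
qed

lemma var_identity:
  fixes a :: "nat \<Rightarrow> 'a::real_inner"
  assumes fin: "finite I" and n: "card I > 0"
  defines "A \<equiv> (1 / real (card I)) *\<^sub>R (\<Sum>i\<in>I. a i)"
  shows "(\<Sum>i\<in>I. (norm (a i))\<^sup>2) / card I = (norm A)\<^sup>2 + (\<Sum>i\<in>I. (norm (a i - A))\<^sup>2) / card I"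
proof -
  let ?n = "real (card I)"
  have sA: "(\<Sum>i\<in>I. a i) = ?n *\<^sub>R A" using n by (simp add: A_def)
  have "(\<Sum>i\<in>I. (norm (a i - A))\<^sup>2) = (\<Sum>i\<in>I. (norm (a i))\<^sup>2 - 2 * (a i \<bullet> A) + (norm A)\<^sup>2)"
    by (rule sum.cong) (simp_all add: power2_norm_eq_inner inner_diff_left inner_diff_right inner_commute)
  also have "\<dots> = (\<Sum>i\<in>I. (norm (a i))\<^sup>2) - 2 * ((\<Sum>i\<in>I. a i) \<bullet> A) + ?n * (norm A)\<^sup>2"
    by (simp add: sum.distrib sum_subtractf sum_distrib_left inner_sum_left)
  also have "\<dots> = (\<Sum>i\<in>I. (norm (a i))\<^sup>2) - ?n * (norm A)\<^sup>2"
    unfolding sA by (simp add: power2_norm_eq_inner)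
  finally show ?thesis using n by (simp add: field_simps)
qed




theorem proposition10:
  fixes fi :: "nat \<Rightarrow> real^'p^'n \<Rightarrow> real"
    and N :: nat and lam eps L mu Lg B :: real
    and X :: "nat \<Rightarrow> real^'p^'n" and eta :: "nat \<Rightarrow> real" and idx :: "nat \<Rightarrow> nat"
    and f :: "real^'p^'n \<Rightarrow> real" and L' Lhat s nu atil etas :: real
  assumes np: "CARD('p) \<le> CARD('n)"
    and lam: "lam > 0"
    and eps: "0 < eps" "eps < 3/4"
    and N: "N \<ge> 1"
    and C2: "\<forall>i\<in>{1..N}. C2 (fi i)"
  defines "f \<equiv> (\<lambda>X. (1 / real N) * (\<Sum>i=1..N. fi i X))"
  assumes L: "L > 0"
    and Lip: "\<forall>X\<in>Stiefel_eps eps. \<forall>Y\<in>Stiefel_eps eps.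
                 norm (egrad f X - egrad f Y) \<le> L * norm (X - Y)"
  defines "L' \<equiv> Sup {norm (egrad f X) | X. X \<in> Stiefel_eps eps}"
    and "Lhat \<equiv> max L L'"
    and "s \<equiv> Sup {norm (msym (transpose X ** egrad f X)) | X. X \<in> Stiefel_eps eps}"
  assumes mu: "mu \<ge> 2 / (3 - 4 * eps) *
                 (L * (1 - eps) + 3 * s + Lhat\<^sup>2 * (1 + eps)\<^sup>2 / (lam * (1 - eps)))"
  defines "nu \<equiv> lam * mu"
  assumes Lg: "Lg > 0"
    and LgLip: "\<forall>X\<in>Stiefel_eps eps. \<forall>Y\<in>Stiefel_eps eps.
                 norm (egrad (Lagr f mu) X - egrad (Lagr f mu) Y) \<le> Lg * norm (X - Y)"
    and B: "B > 0"
    and Bvar: "\<forall>X\<in>Stiefel_eps eps.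
                 (1 / real N) * (\<Sum>i=1..N. (norm (Lam (fi i) lam X - Lam f lam X))\<^sup>2) \<le> B"
  defines "atil \<equiv> Sup {norm (rgrad (fi i) X) | X i. X \<in> Stiefel_eps eps \<and> i \<in> {1..N}}"
    and "etas \<equiv> eta_star atil eps lam"
  assumes X0: "X 0 \<in> Stiefel_eps eps"
    and idx: "\<forall>k. idx k \<in> {1..N}"
    and Xrec: "\<forall>k. X (Suc k) = X k - eta k *\<^sub>R Lam (fi (idx k)) lam (X k)"
    and eta_pos: "\<forall>k. eta k > 0"
    and eta_le: "\<forall>k. eta k \<le> min (1 / (2 * Lg)) (min (nu / (4 * lam\<^sup>2 * Lg * (1 + eps))) etas)"
  shows "\<forall>k. measure_pmf.expectation (pmf_of_set {1..N})
                 (\<lambda>j. Lagr f mu (X k - eta k *\<^sub>R Lam (fi j) lam (X k)))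
           \<le> Lagr f mu (X k) - eta k / 4 * (norm (rgrad f (X k)))\<^sup>2
              - eta k * nu / 2 * Ncal (X k) + Lg * B * (eta k)\<^sup>2 / 2"
proof -
  let ?St = "Stiefel_eps eps :: (real^'p^'n) set"
  let ?I = "{1..N}"
  have Ne: "?I \<noteq> {}" "finite ?I" "card ?I = N" using N by auto
  have Npos: "real N > 0" using N by simp
  have "\<forall>i\<in>?I. \<exists>G. \<exists>G'. (\<forall>x. (fi i has_derivative (\<lambda>h. G x \<bullet> h)) (at x)) \<and>
                    (\<forall>x. (G has_derivative blinfun_apply (G' x)) (at x)) \<and> continuous_on UNIV G'"
    using C2 unfolding C2_def by blast
  then obtain GG where "\<forall>i\<in>?I. \<exists>G'. (\<forall>x. (fi i has_derivative (\<lambda>h. GG i x \<bullet> h)) (at x)) \<and>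
                    (\<forall>x. (GG i has_derivative blinfun_apply (G' x)) (at x)) \<and> continuous_on UNIV G'"
    by (rule bchoice[THEN exE]) blast
  then obtain GG' where GG: "\<And>i. i \<in> ?I \<Longrightarrow> (\<forall>x. (fi i has_derivative (\<lambda>h. GG i x \<bullet> h)) (at x)) \<and>
                    (\<forall>x. (GG i has_derivative blinfun_apply (GG' i x)) (at x)) \<and> continuous_on UNIV (GG' i)"
    by (rule bchoice[THEN exE]) blast
  have fiD: "\<And>i x. i \<in> ?I \<Longrightarrow> (fi i has_derivative (\<lambda>h. GG i x \<bullet> h)) (at x)" using GG by blast
  have GiD: "\<And>i x. i \<in> ?I \<Longrightarrow> (GG i has_derivative blinfun_apply (GG' i x)) (at x)" using GG by blast
  have GiC: "\<And>i. i \<in> ?I \<Longrightarrow> continuous_on UNIV (GG' i)" using GG by blast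
  have egi: "\<And>i. i \<in> ?I \<Longrightarrow> egrad (fi i) = GG i" using fiD by (auto intro!: egrad_eq)
  define Gf where "Gf = (\<lambda>Y. (1 / real N) *\<^sub>R (\<Sum>i\<in>?I. GG i Y))"
  define Hf where "Hf = (\<lambda>Y H. (1 / real N) *\<^sub>R (\<Sum>i\<in>?I. blinfun_apply (GG' i Y) H))"
  have fD: "\<And>Y. (f has_derivative (\<lambda>H. Gf Y \<bullet> H)) (at Y)"
  proof -
    fix Y
    have "((\<lambda>X. (1 / real N) * (\<Sum>i\<in>?I. fi i X)) has_derivative (\<lambda>H. (1 / real N) * (\<Sum>i\<in>?I. GG i Y \<bullet> H))) (at Y)"
      by (intro has_derivative_mult_right has_derivative_sum fiD)
    then show "(f has_derivative (\<lambda>H. Gf Y \<bullet> H)) (at Y)"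
      unfolding f_def Gf_def by (rule has_derivative_eq_rhs) (simp add: fun_eq_iff inner_sum_left)
  qed
  have egf: "egrad f = Gf" using fD by (auto intro!: egrad_eq)
  have GfD: "\<And>Y. (Gf has_derivative Hf Y) (at Y)"
    unfolding Gf_def Hf_def by (intro has_derivative_scaleR_right has_derivative_sum GiD)
  have GfC: "continuous_on UNIV Gf"
    using GfD by (meson continuous_at_imp_continuous_on has_derivative_continuous)
  have GiCont: "\<And>i. i \<in> ?I \<Longrightarrow> continuous_on UNIV (GG i)"
    using GiD by (meson continuous_at_imp_continuous_on has_derivative_continuous)
  have HfC: "\<And>H. continuous_on UNIV (\<lambda>Y. Hf Y H)"
    unfolding Hf_def
    by (intro continuous_on_scaleR continuous_on_const continuous_on_sum
          bounded_bilinear.continuous_on[OF bounded_bilinear_blinfun_apply] GiC) auto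
  have Lip': "\<forall>A\<in>?St. \<forall>B\<in>?St. norm (Gf A - Gf B) \<le> L * norm (A - B)" using Lip by (simp add: egf)
  have hess: "\<And>Y H. Y \<in> ?St \<Longrightarrow> norm (Hf Y H) \<le> L * norm H"
    using eps by (intro hess_bound[OF GfD HfC Lip']) simp_all
  have LD: "\<And>Y. (Lagr f mu has_derivative (\<lambda>H. Gf Y \<bullet> H
      - 1/2 * (msym (transpose H ** Gf Y + transpose Y ** Hf Y H) \<bullet> Dm Y
               + msym (transpose Y ** Gf Y) \<bullet> (transpose H ** Y + transpose Y ** H))
      + mu * (1/2 * (Dm Y \<bullet> (transpose H ** Y + transpose Y ** H))))) (at Y)"
    by (rule Lagr_deriv[OF fD GfD])
  have LD': "\<And>Y. (Lagr f mu has_derivative (\<lambda>H. egrad (Lagr f mu) Y \<bullet> H)) (at Y)"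
  proof -
    fix Y
    show "(Lagr f mu has_derivative (\<lambda>H. egrad (Lagr f mu) Y \<bullet> H)) (at Y)"
      using LD[of Y] by (rule has_derivative_eq_rhs) (simp add: fun_eq_iff egrad_apply[OF LD[of Y]])
  qed
  have cpt: "compact ?St" by (rule compact_Stiefel)
  have bL': "\<And>Y. Y \<in> ?St \<Longrightarrow> norm (Gf Y) \<le> L'"
    unfolding L'_def egf by (rule sup_bound[OF cpt continuous_on_subset[OF GfC]]) simp_all
  have contS: "continuous_on UNIV (\<lambda>X::real^'p^'n. msym (transpose X ** Gf X))"
    by (intro bounded_linear.continuous_on[OF linear_msym] bounded_bilinear.continuous_on[OF bb_mm]
          bounded_linear.continuous_on[OF linear_tr] continuous_on_id GfC)
  have bs: "\<And>Y. Y \<in> ?St \<Longrightarrow> norm (msym (transpose Y ** Gf Y)) \<le> s"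
    unfolding s_def egf by (rule sup_bound[OF cpt continuous_on_subset[OF contS]]) simp_all
  have contR: "\<And>i. i \<in> ?I \<Longrightarrow> continuous_on ?St (rgrad (fi i))"
  proof -
    fix i assume i: "i \<in> ?I"
    have "continuous_on UNIV (\<lambda>X::real^'p^'n. mskew (GG i X ** transpose X) ** X)"
    proof -
      have lin: "bounded_linear (mskew :: real^'n^'n \<Rightarrow> real^'n^'n)"
      proof (rule bounded_linear_intro[where K=1])
        fix M N :: "real^'n^'n" and r :: real
        show "mskew (M + N) = mskew M + mskew N" "mskew (r *\<^sub>R M) = r *\<^sub>R mskew M" by (simp_all add: mskew_linear)
        have "norm (mskew M) \<le> (1/2) * (norm M + norm (transpose M))"
          unfolding mskew_def by (simp add: norm_triangle_ineq4)
        then show "norm (mskew M) \<le> norm M * 1" by (simp add: norm_transpose)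
      qed
      show ?thesis
        by (intro bounded_linear.continuous_on[OF lin] bounded_bilinear.continuous_on[OF bb_mm]
            bounded_linear.continuous_on[OF linear_tr] continuous_on_id GiCont[OF i])
    qed
    then show "continuous_on ?St (rgrad (fi i))"
      unfolding rgrad_def egi[OF i] by (rule continuous_on_subset) simp
  qed
  have batil: "\<And>Y j. Y \<in> ?St \<Longrightarrow> j \<in> ?I \<Longrightarrow> norm (rgrad (fi j) Y) \<le> atil"
    unfolding atil_def by (rule sup_bound2[OF cpt contR]) simp_all
  have safe: "\<And>Y j tau. Y \<in> ?St \<Longrightarrow> j \<in> ?I \<Longrightarrow> 0 \<le> tau \<Longrightarrow> tau \<le> etas \<Longrightarrow> Y - tau *\<^sub>R Lam (fi j) lam Y \<in> ?St"
  proof -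
    fix Y j tau assume Y: "Y \<in> ?St" and j: "j \<in> ?I" and t: "0 \<le> tau" "tau \<le> etas"
    have "norm (Dm (Y - tau *\<^sub>R (mskew (egrad (fi j) Y ** transpose Y) ** Y + lam *\<^sub>R (Y ** Dm Y)))) \<le> eps"
    proof (rule safe_step[OF _ lam eps _ t(1)])
      show "norm (Dm Y) \<le> eps" using Y by (simp add: Stiefel_Dm)
      show "norm (mskew (egrad (fi j) Y ** transpose Y) ** Y) \<le> atil" using batil[OF Y j] by (simp add: rgrad_def)
      show "tau \<le> eta_star atil eps lam" using t(2) by (simp add: etas_def)
    qed
    then show "Y - tau *\<^sub>R Lam (fi j) lam Y \<in> ?St" by (simp add: Stiefel_Dm Lam_expand)
  qed
  have etas_k: "\<And>k. eta k \<le> etas" using eta_le by (meson min.boundedE)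
  have inv: "\<And>k. X k \<in> ?St"
  proof -
    fix k show "X k \<in> ?St"
    proof (induct k)
      case 0 then show ?case using X0 by simp
    next
      case (Suc k)
      then show ?case unfolding Xrec[rule_format] using idx safe eta_pos etas_k
        by (simp add: less_imp_le)
    qed
  qed
  show ?thesis
  proof
    fix k
    define Y where "Y = X k"
    define et where "et = eta k"
    have Y: "Y \<in> ?St" unfolding Y_def by (rule inv)
    have et0: "et > 0" using eta_pos by (simp add: et_def)
    have ets: "et \<le> etas" using etas_k by (simp add: et_def)
    have et1: "et \<le> 1/(2*Lg)" using eta_le by (simp add: et_def)
    have et2: "et \<le> nu/(4*lam\<^sup>2*Lg*(1+eps))" using eta_le by (simp add: et_def)
    define Lj where "Lj = (\<lambda>j. Lam (fi j) lam Y)"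
    define LL where "LL = Lam f lam Y"
    define gL where "gL = egrad (Lagr f mu) Y"
    have desc: "\<And>j. j \<in> ?I \<Longrightarrow> Lagr f mu (Y - et *\<^sub>R Lj j) \<le> Lagr f mu Y - et * (gL \<bullet> Lj j) + Lg/2 * et\<^sup>2 * (norm (Lj j))\<^sup>2"
    proof -
      fix j assume j: "j \<in> ?I"
      show "Lagr f mu (Y - et *\<^sub>R Lj j) \<le> Lagr f mu Y - et * (gL \<bullet> Lj j) + Lg/2 * et\<^sup>2 * (norm (Lj j))\<^sup>2"
        unfolding gL_def
      proof (rule descent[OF LD' _ LgLip])
        show "0 \<le> et" using et0 by simp
        show "\<And>tau. 0 \<le> tau \<Longrightarrow> tau \<le> et \<Longrightarrow> Y - tau *\<^sub>R Lj j \<in> ?St"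
          unfolding Lj_def using safe[OF Y j] ets by simp
      qed
    qed
    have LLavg: "LL = (1 / real N) *\<^sub>R (\<Sum>j\<in>?I. Lj j)"
    proof -
      have "(\<Sum>j\<in>?I. Lj j) = (\<Sum>j\<in>?I. mskew (GG j Y ** transpose Y) ** Y + lam *\<^sub>R (Y ** Dm Y))"
        unfolding Lj_def by (rule sum.cong) (simp_all add: Lam_expand egi)
      also have "\<dots> = mskew ((\<Sum>j\<in>?I. GG j Y) ** transpose Y) ** Y + real N *\<^sub>R (lam *\<^sub>R (Y ** Dm Y))"
        using Ne by (simp add: sum.distrib mskew_linear mm_sum_left sum_constant_scaleR del: sum_constant)
      finally have "(1 / real N) *\<^sub>R (\<Sum>j\<in>?I. Lj j) = mskew (Gf Y ** transpose Y) ** Y + lam *\<^sub>R (Y ** Dm Y)"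
        using Npos by (simp add: Gf_def mskew_linear mm_scaleR_left scaleR_add_right)
      then show ?thesis unfolding LL_def Lam_expand egf by simp
    qed
    have Eq: "measure_pmf.expectation (pmf_of_set ?I) (\<lambda>j. Lagr f mu (Y - et *\<^sub>R Lj j))
        = (\<Sum>j\<in>?I. Lagr f mu (Y - et *\<^sub>R Lj j)) / real N"
      using Ne by (simp add: integral_pmf_of_set)
    have "(\<Sum>j\<in>?I. Lagr f mu (Y - et *\<^sub>R Lj j)) \<le> (\<Sum>j\<in>?I. Lagr f mu Y - et * (gL \<bullet> Lj j) + Lg/2 * et\<^sup>2 * (norm (Lj j))\<^sup>2)"
      by (rule sum_mono[OF desc])
    also have "\<dots> = real N * Lagr f mu Y - et * (gL \<bullet> (\<Sum>j\<in>?I. Lj j)) + Lg/2 * et\<^sup>2 * (\<Sum>j\<in>?I. (norm (Lj j))\<^sup>2)"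
      using Ne by (simp add: sum.distrib sum_subtractf sum_distrib_left inner_sum_right)
    finally have "(\<Sum>j\<in>?I. Lagr f mu (Y - et *\<^sub>R Lj j)) / real N \<le>
       (real N * Lagr f mu Y - et * (gL \<bullet> (\<Sum>j\<in>?I. Lj j)) + Lg/2 * et\<^sup>2 * (\<Sum>j\<in>?I. (norm (Lj j))\<^sup>2)) / real N"
      by (rule divide_right_mono) simp
    also have "\<dots> = Lagr f mu Y - et * (gL \<bullet> LL) + Lg/2 * et\<^sup>2 * ((\<Sum>j\<in>?I. (norm (Lj j))\<^sup>2) / real N)"
      unfolding LLavg using Npos by (simp add: field_simps inner_scaleR_right)
    finally have E1: "(\<Sum>j\<in>?I. Lagr f mu (Y - et *\<^sub>R Lj j)) / real N \<le>
       Lagr f mu Y - et * (gL \<bullet> LL) + Lg/2 * et\<^sup>2 * ((\<Sum>j\<in>?I. (norm (Lj j))\<^sup>2) / real N)" .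
    have var: "(\<Sum>j\<in>?I. (norm (Lj j))\<^sup>2) / real N \<le> (norm LL)\<^sup>2 + B"
    proof -
      have "(\<Sum>j\<in>?I. (norm (Lj j))\<^sup>2) / card ?I = (norm LL)\<^sup>2 + (\<Sum>j\<in>?I. (norm (Lj j - LL))\<^sup>2) / card ?I"
        unfolding LLavg using var_identity[of ?I Lj] Ne by simp
      moreover have "(\<Sum>j\<in>?I. (norm (Lj j - LL))\<^sup>2) / card ?I \<le> B"
        using Bvar Y Ne by (simp add: Lj_def LL_def)
      ultimately show ?thesis using Ne by simp
    qed
    define G where "G = Gf Y"
    define R where "R = mskew (G ** transpose Y) ** Y"
    define W where "W = Y ** Dm Y"
    define S where "S = msym (transpose Y ** G)"
    define d where "d = norm (Dm Y)"
    define g where "g = norm R"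
    define w where "w = norm W"
    define P where "P = (norm (mskew (G ** transpose Y)))\<^sup>2"
    have LLe: "LL = R + lam *\<^sub>R W" unfolding LL_def Lam_expand egf R_def W_def G_def by simp
    have rg: "rgrad f Y = R" unfolding rgrad_def egf R_def G_def by simp
    have dY: "d \<le> eps" using Y by (simp add: Stiefel_Dm d_def)
    have gLLL: "gL \<bullet> LL = P - 1/2 * (G \<bullet> (R ** Dm Y)) - 1/2 * (Hf Y LL \<bullet> W)
      - 3/2 * lam * (S \<bullet> (Dm Y ** Dm Y)) + lam * mu * (norm W)\<^sup>2"
    proof -
      have "gL \<bullet> LL = Gf Y \<bullet> LL
      - 1/2 * (msym (transpose LL ** Gf Y + transpose Y ** Hf Y LL) \<bullet> Dm Y
               + msym (transpose Y ** Gf Y) \<bullet> (transpose LL ** Y + transpose Y ** LL))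
      + mu * (1/2 * (Dm Y \<bullet> (transpose LL ** Y + transpose Y ** LL)))"
        unfolding gL_def by (rule egrad_apply[OF LD])
      also have "\<dots> = P - 1/2 * (G \<bullet> (R ** Dm Y)) - 1/2 * (Hf Y LL \<bullet> W)
      - 3/2 * lam * (S \<bullet> (Dm Y ** Dm Y)) + lam * mu * (norm W)\<^sup>2"
        unfolding LLe G_def[symmetric] P_def R_def W_def S_def by (rule DL_formula)
      finally show ?thesis .
    qed
    have nLL: "(norm LL)\<^sup>2 = g\<^sup>2 + lam\<^sup>2 * w\<^sup>2"
      unfolding LLe R_def W_def g_def w_def by (rule V_norm_sq)
    have h1: "gL \<bullet> LL \<ge> P - 1/2*L'*g*d - 1/2*L*(g + lam*w)*w - 3/2*lam* s*d\<^sup>2 + lam*mu*w\<^sup>2"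
    proof -
      have a1: "G \<bullet> (R ** Dm Y) \<le> L'*g*d"
      proof -
        have "G \<bullet> (R ** Dm Y) \<le> norm G * norm (R ** Dm Y)" by (rule norm_cauchy_schwarz)
        also have "\<dots> \<le> norm G * (g * d)" unfolding g_def d_def by (intro mult_left_mono norm_mm) simp
        also have "\<dots> \<le> L' * (g * d)" using bL'[OF Y] unfolding G_def g_def d_def by (intro mult_right_mono) simp_all
        finally show ?thesis by (simp add: mult_ac)
      qed
      have a2: "Hf Y LL \<bullet> W \<le> L*(g + lam*w)*w"
      proof -
        have "Hf Y LL \<bullet> W \<le> norm (Hf Y LL) * w" unfolding w_def by (rule norm_cauchy_schwarz)
        also have "\<dots> \<le> (L * norm LL) * w" unfolding w_def by (intro mult_right_mono hess[OF Y]) simp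
        also have "norm LL \<le> g + lam * w"
          unfolding LLe g_def w_def using lam by (simp add: norm_triangle_le)
        then have "(L * norm LL) * w \<le> (L * (g + lam*w)) * w"
          using L unfolding w_def by (intro mult_right_mono mult_left_mono) simp_all
        finally show ?thesis by simp
      qed
      have a3: "S \<bullet> (Dm Y ** Dm Y) \<le> s*d\<^sup>2"
      proof -
        have "S \<bullet> (Dm Y ** Dm Y) \<le> norm S * norm (Dm Y ** Dm Y)" by (rule norm_cauchy_schwarz)
        also have "\<dots> \<le> norm S * d\<^sup>2" unfolding d_def by (intro mult_left_mono norm_DD) simp
        also have "\<dots> \<le> s * d\<^sup>2" using bs[OF Y] unfolding S_def G_def by (intro mult_right_mono) simp_all
        finally show ?thesis .
      qed
      have "lam * (S \<bullet> (Dm Y ** Dm Y)) \<le> lam * (s*d\<^sup>2)" using a3 lam by simp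
      then show ?thesis unfolding gLLL w_def[symmetric] using a1 a2 by linarith
    qed
    have h2: "g\<^sup>2 \<le> (1+d)*P" unfolding g_def R_def P_def d_def by (rule AX_bound)
    have wl: "(1-d)*d\<^sup>2 \<le> w\<^sup>2" and wu: "w\<^sup>2 \<le> (1+d)*d\<^sup>2"
      unfolding w_def W_def d_def by (rule XB_bounds(2), rule XB_bounds(1))
    have L'0: "L' \<ge> 0" using bL'[OF Y] norm_ge_zero order_trans by blast
    have s0: "s \<ge> 0" using bs[OF Y] norm_ge_zero order_trans by blast
    have key: "gL \<bullet> LL \<ge> g\<^sup>2/4 + lam*mu*d\<^sup>2/8 + Lg*et/2*(g\<^sup>2 + lam\<^sup>2*w\<^sup>2)"
    proof (rule real_key[OF h1 h2 _ dY _ _ wl wu L L'0 s0 lam eps(1) eps(2) _ Lg et0 et1])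
      show "0 \<le> d" "0 \<le> w" "0 \<le> g" by (simp_all add: d_def w_def g_def)
      show "2/(3-4*eps)*(L*(1-eps) + 3* s + (max L L')\<^sup>2*(1+eps)\<^sup>2/(lam*(1-eps))) \<le> mu"
        using mu by (simp add: Lhat_def)
      show "et \<le> lam*mu/(4*lam\<^sup>2*Lg*(1+eps))" using et2 by (simp add: nu_def)
    qed
    have Nc: "Ncal Y = d\<^sup>2/4" by (simp add: Ncal_def d_def Dm_def)
    have "measure_pmf.expectation (pmf_of_set ?I) (\<lambda>j. Lagr f mu (Y - et *\<^sub>R Lj j))
       \<le> Lagr f mu Y - et * (gL \<bullet> LL) + Lg/2 * et\<^sup>2 * ((norm LL)\<^sup>2 + B)"
    proof -
      have "Lg/2 * et\<^sup>2 * ((\<Sum>j\<in>?I. (norm (Lj j))\<^sup>2) / real N) \<le> Lg/2 * et\<^sup>2 * ((norm LL)\<^sup>2 + B)"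
        using var Lg by (intro mult_left_mono) simp_all
      then show ?thesis unfolding Eq using E1 by linarith
    qed
    also have "\<dots> \<le> Lagr f mu Y - et/4 * g\<^sup>2 - et * nu / 2 * (d\<^sup>2/4) + Lg * B * et\<^sup>2 / 2"
    proof -
      have "et * (gL \<bullet> LL) \<ge> et * (g\<^sup>2/4 + lam*mu*d\<^sup>2/8 + Lg*et/2*(g\<^sup>2 + lam\<^sup>2*w\<^sup>2))"
        using key et0 by (intro mult_left_mono) simp_all
      then show ?thesis unfolding nLL nu_def by (simp add: algebra_simps power2_eq_square)
    qed
    finally show "measure_pmf.expectation (pmf_of_set ?I) (\<lambda>j. Lagr f mu (X k - eta k *\<^sub>R Lam (fi j) lam (X k)))
           \<le> Lagr f mu (X k) - eta k / 4 * (norm (rgrad f (X k)))\<^sup>2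
              - eta k * nu / 2 * Ncal (X k) + Lg * B * (eta k)\<^sup>2 / 2"
      unfolding Y_def[symmetric] et_def[symmetric] rg Nc g_def by (simp add: Lj_def)
  qed
qed


end
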